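(* $\mathrm{HS}_{\mathsf{lin}}$ and $\mathrm{HS}_{\mathsf{st}}$ are expressively incomparable, and so are $\mathrm{HS}_{\mathsf{lin}}$ and $\mathrm{HS}_{\mathsf{ct}}$.
   Context: A Kripke structure over a finite set $\mathcal{AP}$ is $K=(\mathcal{AP},S,\delta,\mu,s_0)$ with states $S$, left-total $\delta\subseteq S\times S$, labelling $\mu:S\to2^{\mathcal{AP}}$, initial state $s_0$; finite if $S$ is finite. An infinite path is an infinite state sequence following $\delta$; a trace is a non-empty finite prefix of one; initial means starting at $s_0$. For a finite word $w=w(0)\cdots w(n)$, $\mathrm{Pref}(w)=\{w[0,i]\mid 0\le i\le n-1\}$, $\mathrm{Suff}(w)=\{w[i,n]\mid 1\le i\le n\}$. The computation tree $C(K)$ has as states the initial traces of $K$, initial state $s_0$, labelling $\rho\mapsto\mu(\text{last state of }\rho)$, transitions $(\rho,\rho\cdot s)$. $\mathrm{HS}$ formulas: $\psi::=p\mid\neg\psi\mid\psi\wedge\psi\mid\langle X\rangle\psi$ for the Allen relations $A,L,B,E,D,O$ and inverses; all modalities are definable (non-strict semantics) from $\langle B\rangle,\langle E\rangle,\langle\bar B\rangle,\langle\bar E\rangle$. State-based: over traces of $K$, $\rho\models p$ iff $p\in\mu(s)$ for every state $s$ of $\rho$; $\rho\models\langle B\rangle\psi$ iff some $\rho'\in\mathrm{Pref}(\rho)$ satisfies $\psi$; $\rho\models\langle E\rangle\psi$ iff some $\rho'\in\mathrm{Suff}(\rho)$ does; $\rho\models\langle\bar B\rangle\psi$ iff some trace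 $\rho'$ with $\rho\in\mathrm{Pref}(\rho')$ does; $\rho\models\langle\bar E\rangle\psi$ iff some trace $\rho'$ with $\rho\in\mathrm{Suff}(\rho')$ does. $K\models_{\mathsf{st}}\psi$ iff every initial trace satisfies $\psi$. Computation-tree-based: $K\models_{\mathsf{ct}}\psi$ iff $C(K)\models_{\mathsf{st}}\psi$. Trace-based: for an infinite path $\pi$, intervals $[i,j]$, $0\le i\le j$; $[i,j]\models p$ iff $p\in\mu(\pi(h))$ for all $i\le h\le j$; $[x,y]\models\langle B\rangle\psi$ iff $[x,z]\models\psi$ for some $x\le z<y$; $\langle E\rangle$: $[v,y]$ for some $x<v\le y$; $\langle\bar B\rangle$: $[x,z]$ for some $z>y$; $\langle\bar E\rangle$: $[v,y]$ for some $v<x$. $K\models_{\mathsf{lin}}\psi$ iff for every initial infinite path $\pi$ and $i\ge0$, $[0,i]\models\psi$ in $\pi$. $\mathrm{HS}_{\mathsf{st}},\mathrm{HS}_{\mathsf{ct}},\mathrm{HS}_{\mathsf{lin}}$ denote $\mathrm{HS}$ under these semantics. Expressiveness: $\varphi_1\in L_1$, $\varphi_2\in L_2$ are equivalent if for every finite Kripke structure $K$, $K$ is a model of $\varphi_1$ in $L_1$ iff of $\varphi_2$ in $L_2$; $L_1\ge L_2$ if every $L_2$ formula has an equivalent $L_1$ formula; $L_1,L_2$ are expressively incomparable if $L_1\not\ge L_2$ and $L_2\not\ge L_1$. *)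

theory Defs
  imports Main
begin

record ('s, 'ap) kripke =
  St   :: "'s set"
  Tr   :: "('s \<times> 's) set"
  Lab  :: "'s \<Rightarrow> 'ap set"
  Init :: "'s"

definition wf_kripke :: "('s, 'ap) kripke \<Rightarrow> bool" where
  "wf_kripke K \<longleftrightarrow> Tr K \<subseteq> St K \<times> St K \<and> (\<forall>s\<in>St K. \<exists>t. (s, t) \<in> Tr K) \<and> Init K \<in> St K"

definition finite_kripke :: "('s, 'ap) kripke \<Rightarrow> bool" where
  "finite_kripke K \<longleftrightarrow> wf_kripke K \<and> finite (St K)"

definition is_inf_path :: "('s, 'ap) kripke \<Rightarrow> (nat \<Rightarrow> 's) \<Rightarrow> bool" where
  "is_inf_path K \<pi> \<longleftrightarrow> (\<forall>i. (\<pi> i, \<pi> (Suc i)) \<in> Tr K)"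

definition is_trace :: "('s, 'ap) kripke \<Rightarrow> 's list \<Rightarrow> bool" where
  "is_trace K \<rho> \<longleftrightarrow> \<rho> \<noteq> [] \<and> (\<exists>\<pi>. is_inf_path K \<pi> \<and> \<rho> = map \<pi> [0..<length \<rho>])"

definition is_init_trace :: "('s, 'ap) kripke \<Rightarrow> 's list \<Rightarrow> bool" where
  "is_init_trace K \<rho> \<longleftrightarrow> is_trace K \<rho> \<and> hd \<rho> = Init K"

definition Pref :: "'s list \<Rightarrow> 's list set" where
  "Pref w = {take i w | i. 1 \<le> i \<and> i < length w}"

definition Suff :: "'s list \<Rightarrow> 's list set" where
  "Suff w = {drop i w | i. 1 \<le> i \<and> i < length w}"

section \<open>HS formulas (modalities B, E, B-bar, E-bar; the others are definable)\<close>

datatype 'ap hs =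
    Prop 'ap
  | Neg "'ap hs"
  | And "'ap hs" "'ap hs"
  | Bm "'ap hs"
  | Em "'ap hs"
  | Bbar "'ap hs"
  | Ebar "'ap hs"

fun sat_st :: "('s, 'ap) kripke \<Rightarrow> 's list \<Rightarrow> 'ap hs \<Rightarrow> bool" where
  "sat_st K \<rho> (Prop p) \<longleftrightarrow> (\<forall>s\<in>set \<rho>. p \<in> Lab K s)"
| "sat_st K \<rho> (Neg \<psi>) \<longleftrightarrow> \<not> sat_st K \<rho> \<psi>"
| "sat_st K \<rho> (And \<psi> \<chi>) \<longleftrightarrow> sat_st K \<rho> \<psi> \<and> sat_st K \<rho> \<chi>"
| "sat_st K \<rho> (Bm \<psi>) \<longleftrightarrow> (\<exists>\<rho>'\<in>Pref \<rho>. sat_st K \<rho>' \<psi>)"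
| "sat_st K \<rho> (Em \<psi>) \<longleftrightarrow> (\<exists>\<rho>'\<in>Suff \<rho>. sat_st K \<rho>' \<psi>)"
| "sat_st K \<rho> (Bbar \<psi>) \<longleftrightarrow> (\<exists>\<rho>'. is_trace K \<rho>' \<and> \<rho> \<in> Pref \<rho>' \<and> sat_st K \<rho>' \<psi>)"
| "sat_st K \<rho> (Ebar \<psi>) \<longleftrightarrow> (\<exists>\<rho>'. is_trace K \<rho>' \<and> \<rho> \<in> Suff \<rho>' \<and> sat_st K \<rho>' \<psi>)"

definition models_st :: "('s, 'ap) kripke \<Rightarrow> 'ap hs \<Rightarrow> bool" where
  "models_st K \<psi> \<longleftrightarrow> (\<forall>\<rho>. is_init_trace K \<rho> \<longrightarrow> sat_st K \<rho> \<psi>)"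

definition comp_tree :: "('s, 'ap) kripke \<Rightarrow> ('s list, 'ap) kripke" where
  "comp_tree K = \<lparr> St = {\<rho>. is_init_trace K \<rho>},
                   Tr = {(\<rho>, \<rho> @ [s]) | \<rho> s. is_init_trace K \<rho> \<and> is_init_trace K (\<rho> @ [s])},
                   Lab = (\<lambda>\<rho>. Lab K (last \<rho>)),
                   Init = [Init K] \<rparr>"

definition models_ct :: "('s, 'ap) kripke \<Rightarrow> 'ap hs \<Rightarrow> bool" where
  "models_ct K \<psi> \<longleftrightarrow> models_st (comp_tree K) \<psi>"

fun sat_lin :: "('s, 'ap) kripke \<Rightarrow> (nat \<Rightarrow> 's) \<Rightarrow> nat \<Rightarrow> nat \<Rightarrow> 'ap hs \<Rightarrow> bool" where
  "sat_lin K \<pi> x y (Prop p) \<longleftrightarrow> (\<forall>h. x \<le> h \<and> h \<le> y \<longrightarrow> p \<in> Lab K (\<pi> h))"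
| "sat_lin K \<pi> x y (Neg \<psi>) \<longleftrightarrow> \<not> sat_lin K \<pi> x y \<psi>"
| "sat_lin K \<pi> x y (And \<psi> \<chi>) \<longleftrightarrow> sat_lin K \<pi> x y \<psi> \<and> sat_lin K \<pi> x y \<chi>"
| "sat_lin K \<pi> x y (Bm \<psi>) \<longleftrightarrow> (\<exists>z. x \<le> z \<and> z < y \<and> sat_lin K \<pi> x z \<psi>)"
| "sat_lin K \<pi> x y (Em \<psi>) \<longleftrightarrow> (\<exists>v. x < v \<and> v \<le> y \<and> sat_lin K \<pi> v y \<psi>)"
| "sat_lin K \<pi> x y (Bbar \<psi>) \<longleftrightarrow> (\<exists>z. z > y \<and> sat_lin K \<pi> x z \<psi>)"
| "sat_lin K \<pi> x y (Ebar \<psi>) \<longleftrightarrow> (\<exists>v. v < x \<and> sat_lin K \<pi> v y \<psi>)"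

definition models_lin :: "('s, 'ap) kripke \<Rightarrow> 'ap hs \<Rightarrow> bool" where
  "models_lin K \<psi> \<longleftrightarrow>
     (\<forall>\<pi>. is_inf_path K \<pi> \<and> \<pi> 0 = Init K \<longrightarrow> (\<forall>i. sat_lin K \<pi> 0 i \<psi>))"

section \<open>Expressiveness (over finite Kripke structures; states w.l.o.g. natural numbers)\<close>

type_synonym 'ap semantics = "(nat, 'ap) kripke \<Rightarrow> 'ap hs \<Rightarrow> bool"

definition expr_equiv :: "'ap semantics \<Rightarrow> 'ap hs \<Rightarrow> 'ap semantics \<Rightarrow> 'ap hs \<Rightarrow> bool" where
  "expr_equiv L1 \<phi>1 L2 \<phi>2 \<longleftrightarrow> (\<forall>K. finite_kripke K \<longrightarrow> (L1 K \<phi>1 \<longleftrightarrow> L2 K \<phi>2))"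

definition expr_geq :: "'ap semantics \<Rightarrow> 'ap semantics \<Rightarrow> bool" where
  "expr_geq L1 L2 \<longleftrightarrow> (\<forall>\<phi>2. \<exists>\<phi>1. expr_equiv L1 \<phi>1 L2 \<phi>2)"

definition expr_incomparable :: "'ap semantics \<Rightarrow> 'ap semantics \<Rightarrow> bool" where
  "expr_incomparable L1 L2 \<longleftrightarrow> \<not> expr_geq L1 L2 \<and> \<not> expr_geq L2 L1"

end

theory Submission
  imports Defs
begin


definition eqT :: "int \<Rightarrow> int \<Rightarrow> int \<Rightarrow> bool" where
  "eqT T a b \<longleftrightarrow> a = b \<or> (T \<le> a \<and> T \<le> b) \<or> (a \<le> -T \<and> b \<le> -T)"

definition relT :: "int \<Rightarrow> int list \<Rightarrow> int list \<Rightarrow> bool" where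
  "relT T xs ys \<longleftrightarrow> length xs = length ys \<and>
     (\<forall>i<length xs. \<forall>j<length xs. eqT T (xs!i - xs!j) (ys!i - ys!j))"

lemma eqT_sym: "eqT T a b \<Longrightarrow> eqT T b a" by (auto simp: eqT_def)
lemma eqT_mono: "eqT T a b \<Longrightarrow> T' \<le> T \<Longrightarrow> eqT T' a b" by (auto simp: eqT_def)

lemma relT_sym: "relT T xs ys \<Longrightarrow> relT T ys xs"
  by (auto simp: relT_def eqT_sym)

lemma relT_mono: "relT T xs ys \<Longrightarrow> T' \<le> T \<Longrightarrow> relT T' xs ys"
  unfolding relT_def using eqT_mono by blast

lemma relT_ext:
  assumes T: "0 < T" and R: "relT (2*T) xs ys" and ne: "xs \<noteq> []"
  shows "\<exists>y. relT T (xs @ [x]) (ys @ [y])"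
proof -
  have len: "length xs = length ys" using R by (simp add: relT_def)
  have E: "\<And>i j. i < length xs \<Longrightarrow> j < length xs \<Longrightarrow> eqT (2*T) (xs!i - xs!j) (ys!i - ys!j)"
    using R by (simp add: relT_def)
  have goal: "relT T (xs @ [x]) (ys @ [y])"
    if new: "\<And>j. j < length xs \<Longrightarrow> eqT T (x - xs!j) (y - ys!j)" for y
  proof -
    { fix i j assume i: "i < Suc (length xs)" and j: "j < Suc (length xs)"
      have "eqT T ((xs @ [x]) ! i - (xs @ [x]) ! j) ((ys @ [y]) ! i - (ys @ [y]) ! j)"
      proof (cases "i = length xs")
        case True
        show ?thesis
        proof (cases "j = length xs")
          case True with \<open>i = length xs\<close> len show ?thesis by (simp add: eqT_def)
        next
          case False
          then have "j < length xs" using j by simp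
          with new[OF this] True len show ?thesis by (simp add: nth_append)
        qed
      next
        case False
        then have i': "i < length xs" using i by simp
        show ?thesis
        proof (cases "j = length xs")
          case True
          have "eqT T (x - xs!i) (y - ys!i)" using new[OF i'] .
          then have "eqT T (xs!i - x) (ys!i - y)" by (auto simp: eqT_def)
          with True i' len show ?thesis by (simp add: nth_append)
        next
          case False
          then have "j < length xs" using j by simp
          with E[OF i' this] i' len T show ?thesis
            by (auto simp: nth_append intro: eqT_mono)
        qed
      qed }
    then show ?thesis using len by (simp add: relT_def)
  qed
  show ?thesis
  proof (cases "\<exists>i<length xs. \<bar>x - xs!i\<bar> < T")
    case True
    then obtain i where i: "i < length xs" "\<bar>x - xs!i\<bar> < T" by blast
    show ?thesis
    proof (intro exI goal)
      fix j assume j: "j < length xs"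
      from E[OF i(1) j] i(2) show "eqT T (x - xs!j) (ys!i + (x - xs!i) - ys!j)"
        by (auto simp: eqT_def)
    qed
  next
    case False
    then have far: "\<And>i. i < length xs \<Longrightarrow> T \<le> \<bar>x - xs!i\<bar>" by force
    define L where "L = {i. i < length xs \<and> xs!i < x}"
    have finL: "finite L" unfolding L_def by simp
    show ?thesis
    proof (cases "L = {}")
      case True
      define m where "m = Min ((!) ys ` {..<length xs})"
      have mle: "\<And>j. j < length xs \<Longrightarrow> m \<le> ys!j" unfolding m_def by simp
      show ?thesis
      proof (intro exI goal)
        fix j assume j: "j < length xs"
        have "xs!j \<ge> x" using True j unfolding L_def by auto
        with far[OF j] have "x - xs!j \<le> -T" by auto
        moreover have "m - T - ys!j \<le> -T" using mle[OF j] by simp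
        ultimately show "eqT T (x - xs!j) (m - T - ys!j)" by (simp add: eqT_def)
      qed
    next
      case False
      define m where "m = Max ((!) ys ` L)"
      have "m \<in> (!) ys ` L" unfolding m_def using finL False by (intro Max_in) auto
      then obtain i0 where i0: "i0 \<in> L" "m = ys!i0" by blast
      have mge: "\<And>j. j \<in> L \<Longrightarrow> ys!j \<le> m" unfolding m_def using finL by simp
      have i0l: "i0 < length xs" "xs!i0 < x" using i0 unfolding L_def by auto
      show ?thesis
      proof (intro exI goal)
        fix j assume j: "j < length xs"
        show "eqT T (x - xs!j) (m + T - ys!j)"
        proof (cases "j \<in> L")
          case True
          then have "xs!j < x" unfolding L_def by simp
          with far[OF j] have "T \<le> x - xs!j" by auto
          moreover have "T \<le> m + T - ys!j" using mge[OF True] by simp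
          ultimately show ?thesis by (simp add: eqT_def)
        next
          case False
          then have "xs!j \<ge> x" using j unfolding L_def by auto
          with far[OF j] have xj: "x + T \<le> xs!j" by auto
          have "x - T \<ge> xs!i0" using far[OF i0l(1)] i0l(2) by auto
          with xj have "2*T \<le> xs!j - xs!i0" by simp
          with E[OF j i0l(1)] T have "2*T \<le> ys!j - ys!i0" by (auto simp: eqT_def)
          then have "m + T - ys!j \<le> -T" using i0(2) by simp
          moreover have "x - xs!j \<le> -T" using xj by simp
          ultimately show ?thesis by (simp add: eqT_def)
        qed
      qed
    qed
  qed
qed

lemma relT_list_iff:
  "relT T xs ys \<longleftrightarrow> length xs = length ys \<and>
     (\<forall>p\<in>set (zip xs ys). \<forall>q\<in>set (zip xs ys). eqT T (fst p - fst q) (snd p - snd q))"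
  unfolding relT_def
  by (auto simp: set_zip) (metis fst_conv snd_conv)+

lemma eqT_neg: "eqT T (a - b) (c - d) \<longleftrightarrow> eqT T (b - a) (d - c)"
  by (auto simp: eqT_def)

lemma eqT_0: "eqT T 0 0" by (simp add: eqT_def)

lemma relT3: "relT T [a,b,c] [a',b',c'] \<longleftrightarrow>
  eqT T (b-a) (b'-a') \<and> eqT T (c-a) (c'-a') \<and> eqT T (c-b) (c'-b')"
  unfolding relT_list_iff by (auto simp: eqT_0 eqT_neg)

lemma relT4: "relT T [a,b,c,d] [a',b',c',d'] \<longleftrightarrow>
  eqT T (b-a) (b'-a') \<and> eqT T (c-a) (c'-a') \<and> eqT T (d-a) (d'-a') \<and>
  eqT T (c-b) (c'-b') \<and> eqT T (d-b) (d'-b') \<and> eqT T (d-c) (d'-c')"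
  unfolding relT_list_iff by (auto simp: eqT_0 eqT_neg)

lemma relT5: "relT T [a,b,c,d,e] [a',b',c',d',e'] \<longleftrightarrow>
  eqT T (b-a) (b'-a') \<and> eqT T (c-a) (c'-a') \<and> eqT T (d-a) (d'-a') \<and> eqT T (e-a) (e'-a') \<and>
  eqT T (c-b) (c'-b') \<and> eqT T (d-b) (d'-b') \<and> eqT T (e-b) (e'-b') \<and>
  eqT T (d-c) (d'-c') \<and> eqT T (e-c) (e'-c') \<and> eqT T (e-d) (e'-d')"
  unfolding relT_list_iff by (auto simp: eqT_0 eqT_neg)



definition stt :: "nat \<Rightarrow> int \<Rightarrow> nat" where
  "stt K t = (if t \<le> 0 then 0 else if t \<le> int K then nat t else Suc K)"

definition lst :: "nat \<Rightarrow> int \<Rightarrow> nat \<Rightarrow> nat list" where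
  "lst K s n = map (\<lambda>t. stt K (s + int t)) [0..<n]"

definition SK :: "nat \<Rightarrow> nat \<Rightarrow> (nat, 'ap) kripke" where
  "SK K ini = \<lparr> St = {0..Suc K},
     Tr = {(0,0),(0,1)} \<union> {(i, Suc i) | i. 1 \<le> i \<and> i \<le> K} \<union> {(Suc K, Suc K)},
     Lab = (\<lambda>s. if s = Suc K then UNIV else {}), Init = ini \<rparr>"

lemma SK_simps[simp]:
  "St (SK K ini) = {0..Suc K}"
  "Tr (SK K ini) = {(0,0),(0,1)} \<union> {(i, Suc i) | i. 1 \<le> i \<and> i \<le> K} \<union> {(Suc K, Suc K)}"
  "Lab (SK K ini) = (\<lambda>s. if s = Suc K then UNIV else {})"
  "Init (SK K ini) = ini"
  by (simp_all add: SK_def)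

lemma length_lst[simp]: "length (lst K s n) = n" by (simp add: lst_def)
lemma nth_lst[simp]: "i < n \<Longrightarrow> lst K s n ! i = stt K (s + int i)" by (simp add: lst_def)
lemma take_lst: "m \<le> n \<Longrightarrow> take m (lst K s n) = lst K s m"
  by (simp add: lst_def take_map)
lemma drop_lst: "m \<le> n \<Longrightarrow> drop m (lst K s n) = lst K (s + int m) (n - m)"
  by (rule nth_equalityI) (auto simp: algebra_simps)
lemma lst_ne: "1 \<le> n \<Longrightarrow> lst K s n \<noteq> []"
  by (metis length_lst le_zero_eq list.size(3) one_neq_zero)
lemma hd_lst: "1 \<le> n \<Longrightarrow> hd (lst K s n) = stt K s"
  by (simp add: hd_conv_nth lst_ne)
lemma last_lst: "1 \<le> n \<Longrightarrow> last (lst K s n) = stt K (s + int n - 1)"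
  by (simp add: last_conv_nth lst_ne of_nat_diff add_diff_eq)

lemma stt_Tr: "(stt K u, stt K (u+1)) \<in> Tr (SK K ini)"
  by (auto simp: stt_def nat_add_distrib)

lemma stt_eq_SucK: "stt K t = Suc K \<longleftrightarrow> int K + 1 \<le> t"
  by (auto simp: stt_def)

lemma stt_eq0: "stt K t = 0 \<longleftrightarrow> t \<le> 0"
  by (auto simp: stt_def)

lemma stt_int: "i \<le> Suc K \<Longrightarrow> stt K (int i) = i"
  by (auto simp: stt_def)

lemma path_rep:
  assumes K: "1 \<le> K" and p: "is_inf_path (SK K ini) \<pi>"
  shows "\<exists>s. \<forall>t\<le>m. \<pi> t = stt K (s + int t)"
proof (induction m)
  case 0
  have "(\<pi> 0, \<pi> 1) \<in> Tr (SK K ini)" using p by (simp add: is_inf_path_def)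
  then have "\<pi> 0 \<le> Suc K" by auto
  then show ?case by (intro exI[of _ "int (\<pi> 0)"]) (simp add: stt_int)
next
  case (Suc m)
  then obtain s where s: "\<forall>t\<le>m. \<pi> t = stt K (s + int t)" by blast
  have tr: "(\<pi> m, \<pi> (Suc m)) \<in> Tr (SK K ini)" using p by (simp add: is_inf_path_def)
  have pm: "\<pi> m = stt K (s + int m)" using s by simp
  show ?case
  proof (cases "\<pi> m = 0")
    case True
    then have sm: "s + int m \<le> 0" using pm stt_eq0 by metis
    have all0: "\<forall>t\<le>m. \<pi> t = 0" using s sm by (auto simp: stt_def)
    from tr True have "\<pi> (Suc m) = 0 \<or> \<pi> (Suc m) = 1" by auto
    then show ?thesis
    proof
      assume a: "\<pi> (Suc m) = 0"
      show ?thesis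
        by (rule exI[of _ "- int m - 1"]) (use all0 a in \<open>auto simp: stt_def le_Suc_eq\<close>)
    next
      assume a: "\<pi> (Suc m) = 1"
      show ?thesis
        by (rule exI[of _ "- int m"]) (use all0 a in \<open>auto simp: stt_def le_Suc_eq\<close>)
    qed
  next
    case False
    have "\<pi> (Suc m) = stt K (s + int m + 1)"
    proof -
      have "\<pi> m = Suc K \<or> (1 \<le> \<pi> m \<and> \<pi> m \<le> K)" using tr False by auto
      then show ?thesis
      proof
        assume a: "\<pi> m = Suc K"
        then have "\<pi> (Suc m) = Suc K" using tr by auto
        moreover have "int K + 1 \<le> s + int m" using a pm stt_eq_SucK by metis
        ultimately show ?thesis by (simp add: stt_def)
      next
        assume a: "1 \<le> \<pi> m \<and> \<pi> m \<le> K"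
        then have "\<pi> (Suc m) = Suc (\<pi> m)" using tr by auto
        moreover have "s + int m = int (\<pi> m)" using a pm by (auto simp: stt_def split: if_splits)
        ultimately show ?thesis using a by (auto simp: stt_def)
      qed
    qed
    then show ?thesis using s by (intro exI[of _ s]) (auto simp: le_Suc_eq algebra_simps)
  qed
qed

lemma trace_SK:
  assumes K: "1 \<le> K"
  shows "is_trace (SK K ini :: (nat,'ap) kripke) \<rho> \<longleftrightarrow> (\<exists>s n. 1 \<le> n \<and> \<rho> = lst K s n)"
proof
  assume "is_trace (SK K ini :: (nat,'ap) kripke) \<rho>"
  then obtain \<pi> where ne: "\<rho> \<noteq> []" and p: "is_inf_path (SK K ini :: (nat,'ap) kripke) \<pi>"
    and r: "\<rho> = map \<pi> [0..<length \<rho>]" unfolding is_trace_def by blast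
  obtain s where s: "\<forall>t\<le>length \<rho>. \<pi> t = stt K (s + int t)" using path_rep[OF K p] by blast
  have "\<rho> = lst K s (length \<rho>)" unfolding lst_def
  proof (rule nth_equalityI)
    fix i assume i: "i < length \<rho>"
    have "\<rho> ! i = \<pi> i" using i by (subst r) simp
    also have "\<dots> = stt K (s + int i)" using s i by simp
    finally show "\<rho> ! i = map (\<lambda>t. stt K (s + int t)) [0..<length \<rho>] ! i" using i by simp
  qed simp
  then show "\<exists>s n. 1 \<le> n \<and> \<rho> = lst K s n" using ne by (intro exI[of _ s] exI[of _ "length \<rho>"]) (auto simp: Suc_le_eq)
next
  assume "\<exists>s n. 1 \<le> n \<and> \<rho> = lst K s n"
  then obtain s n where n: "1 \<le> n" and r: "\<rho> = lst K s n" by blast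
  define \<pi> where "\<pi> = (\<lambda>t::nat. stt K (s + int t))"
  have "is_inf_path (SK K ini :: (nat,'ap) kripke) \<pi>" unfolding is_inf_path_def \<pi>_def
    using stt_Tr[of K "s + int _" ini] by (simp add: algebra_simps)
  moreover have "\<rho> = map \<pi> [0..<length \<rho>]" using r by (simp add: lst_def \<pi>_def)
  ultimately show "is_trace (SK K ini :: (nat,'ap) kripke) \<rho>" using n r unfolding is_trace_def by (auto)
qed



fun height :: "'ap hs \<Rightarrow> nat" where
  "height (Prop p) = 0"
| "height (Neg \<psi>) = height \<psi>"
| "height (And \<psi> \<chi>) = max (height \<psi>) (height \<chi>)"
| "height (Bm \<psi>) = Suc (height \<psi>)"
| "height (Em \<psi>) = Suc (height \<psi>)"
| "height (Bbar \<psi>) = Suc (height \<psi>)"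
| "height (Ebar \<psi>) = Suc (height \<psi>)"

lemma eqT_pos: "0 < T \<Longrightarrow> eqT T a b \<Longrightarrow> 0 < a \<Longrightarrow> 0 < b" by (auto simp: eqT_def)
lemma eqT_nonneg: "0 < T \<Longrightarrow> eqT T a b \<Longrightarrow> 0 \<le> a \<Longrightarrow> 0 \<le> b" by (auto simp: eqT_def)
lemma eqT_negv: "0 < T \<Longrightarrow> eqT T a b \<Longrightarrow> a < 0 \<Longrightarrow> b < 0" by (auto simp: eqT_def)

lemma Pref_lst: "Pref (lst K s n) = {lst K s m | m. 1 \<le> m \<and> m < n}"
  unfolding Pref_def
proof (intro set_eqI iffI)
  fix x assume "x \<in> {take i (lst K s n) |i. 1 \<le> i \<and> i < length (lst K s n)}"
  then show "x \<in> {lst K s m |m. 1 \<le> m \<and> m < n}" by (auto simp: take_lst)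
next
  fix x assume "x \<in> {lst K s m |m. 1 \<le> m \<and> m < n}"
  then obtain m where "x = lst K s m" "1 \<le> m" "m < n" by blast
  then show "x \<in> {take i (lst K s n) |i. 1 \<le> i \<and> i < length (lst K s n)}"
    by (intro CollectI exI[of _ m]) (simp add: take_lst)
qed

lemma Suff_lst: "Suff (lst K s n) = {lst K (s + int m) (n - m) | m. 1 \<le> m \<and> m < n}"
  unfolding Suff_def
proof (intro set_eqI iffI)
  fix x assume "x \<in> {drop i (lst K s n) |i. 1 \<le> i \<and> i < length (lst K s n)}"
  then show "x \<in> {lst K (s + int m) (n - m) |m. 1 \<le> m \<and> m < n}" by (auto simp: drop_lst)
next
  fix x assume "x \<in> {lst K (s + int m) (n - m) |m. 1 \<le> m \<and> m < n}"
  then obtain m where "x = lst K (s + int m) (n - m)" "1 \<le> m" "m < n" by blast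
  then show "x \<in> {drop i (lst K s n) |i. 1 \<le> i \<and> i < length (lst K s n)}"
    by (intro CollectI exI[of _ m]) (simp add: drop_lst)
qed

lemma lst_eq:
  assumes K: "1 \<le> K" and n: "1 \<le> n" and e: "lst K s0 n = lst K s n"
  shows "s0 = s \<or> (s + int n \<le> 1 \<and> s0 + int n \<le> 1) \<or> (int K + 1 \<le> s \<and> int K + 1 \<le> s0)"
proof -
  have nth: "\<And>t. t < n \<Longrightarrow> stt K (s0 + int t) = stt K (s + int t)"
    using e by (metis nth_lst)
  show ?thesis
  proof (cases "\<exists>t<n. 1 \<le> s + int t \<and> s + int t \<le> int K")
    case True
    then obtain t where t: "t < n" "1 \<le> s + int t" "s + int t \<le> int K" by blast
    have "stt K (s0 + int t) = nat (s + int t)" using nth[OF t(1)] t by (simp add: stt_def)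
    then have "s0 + int t = s + int t" using t K by (auto simp: stt_def split: if_splits)
    then show ?thesis by simp
  next
    case False
    then have F: "\<And>t. t < n \<Longrightarrow> s + int t \<le> 0 \<or> int K + 1 \<le> s + int t" by force
    show ?thesis
    proof (cases "s \<le> 0")
      case True
      have "s + int n \<le> 1"
      proof (rule ccontr)
        assume "\<not> s + int n \<le> 1"
        then have "nat (1 - s) < n" using True by linarith
        from F[OF this] True K show False by simp
      qed
      moreover have "stt K (s0 + int (n - 1)) = 0"
        using nth[of "n-1"] n \<open>s + int n \<le> 1\<close> by (simp add: stt_def of_nat_diff)
      ultimately show ?thesis using n by (simp add: stt_eq0 of_nat_diff)
    next
      case False
      then have "int K + 1 \<le> s" using F[of 0] n by simp
      moreover have "stt K s0 = Suc K" using nth[of 0] n calculation by (simp add: stt_def)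
      ultimately show ?thesis by (simp add: stt_eq_SucK)
    qed
  qed
qed

context
  fixes K :: nat and ini :: nat and M :: "(nat,'ap) kripke"
  assumes K1: "1 \<le> K" and Mdef: "M = SK K ini"
begin

lemma trM: "is_trace M \<rho> \<longleftrightarrow> (\<exists>s n. 1 \<le> n \<and> \<rho> = lst K s n)"
  using trace_SK[OF K1, where ini=ini and 'ap='ap] Mdef by simp

lemma sat_prop_lst: "1 \<le> n \<Longrightarrow> sat_st M (lst K s n) (Prop p) \<longleftrightarrow> int K + 1 \<le> s"
proof -
  assume n: "1 \<le> n"
  have "sat_st M (lst K s n) (Prop p) \<longleftrightarrow> (\<forall>t<n. stt K (s + int t) = Suc K)"
    by (auto simp add: all_set_conv_all_nth Mdef)
  also have "\<dots> \<longleftrightarrow> int K + 1 \<le> s"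
  proof
    assume A: "\<forall>t<n. stt K (s + int t) = Suc K"
    have "0 < n" using n by simp
    with A have "stt K (s + int 0) = Suc K" by blast
    then show "int K + 1 \<le> s" by (simp add: stt_eq_SucK)
  qed (auto simp: stt_eq_SucK)
  finally show ?thesis .
qed

lemma sat_Bm_lst: "sat_st M (lst K s n) (Bm \<psi>) \<longleftrightarrow> (\<exists>m. 1 \<le> m \<and> m < n \<and> sat_st M (lst K s m) \<psi>)"
  by (auto simp: Pref_lst)

lemma sat_Em_lst: "sat_st M (lst K s n) (Em \<psi>) \<longleftrightarrow>
   (\<exists>m. 1 \<le> m \<and> m < n \<and> sat_st M (lst K (s + int m) (n - m)) \<psi>)"
  by (auto simp: Suff_lst)

lemma sat_Bbar_lst: "1 \<le> n \<Longrightarrow> sat_st M (lst K s n) (Bbar \<psi>) \<longleftrightarrow>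
   (\<exists>s0 m. lst K s0 n = lst K s n \<and> n < m \<and> sat_st M (lst K s0 m) \<psi>)"
proof
  assume "sat_st M (lst K s n) (Bbar \<psi>)"
  then obtain \<rho>' where t: "is_trace M \<rho>'" and p: "lst K s n \<in> Pref \<rho>'" and sa: "sat_st M \<rho>' \<psi>" unfolding sat_st.simps by blast
  from t obtain s2 n2 where r: "\<rho>' = lst K s2 n2" using trM by blast
  from p r obtain m where m: "1 \<le> m" "m < n2" "lst K s n = lst K s2 m" by (auto simp: Pref_lst)
  then have "m = n" by (metis length_lst)
  with m sa r show "\<exists>s0 m. lst K s0 n = lst K s n \<and> n < m \<and> sat_st M (lst K s0 m) \<psi>"
    by (intro exI[of _ s2] exI[of _ n2]) auto
next
  assume n: "1 \<le> n"
  assume "\<exists>s0 m. lst K s0 n = lst K s n \<and> n < m \<and> sat_st M (lst K s0 m) \<psi>"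
  then obtain s0 m where e: "lst K s0 n = lst K s n" "n < m" "sat_st M (lst K s0 m) \<psi>" by blast
  have "is_trace M (lst K s0 m)" unfolding trM using e n by (intro exI[of _ s0] exI[of _ m]) auto
  moreover have "lst K s n \<in> Pref (lst K s0 m)" unfolding Pref_lst using e n
    by (intro CollectI exI[of _ n]) auto
  ultimately show "sat_st M (lst K s n) (Bbar \<psi>)" using e(3) unfolding sat_st.simps by blast
qed

lemma sat_Ebar_lst: "1 \<le> n \<Longrightarrow> sat_st M (lst K s n) (Ebar \<psi>) \<longleftrightarrow>
   (\<exists>s0 v m. lst K s0 n = lst K s n \<and> v < s0 \<and> v + int m = s0 + int n \<and> sat_st M (lst K v m) \<psi>)"
proof
  assume "sat_st M (lst K s n) (Ebar \<psi>)"
  then obtain \<rho>' where t: "is_trace M \<rho>'" and p: "lst K s n \<in> Suff \<rho>'" and sa: "sat_st M \<rho>' \<psi>" unfolding sat_st.simps by blast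
  from t obtain v m where "1 \<le> m" and r: "\<rho>' = lst K v m" using trM by blast
  with p obtain i where i: "1 \<le> i" "i < m" "lst K s n = lst K (v + int i) (m - i)"
    by (auto simp: Suff_lst)
  then have "n = m - i" by (metis length_lst)
  with i sa r show "\<exists>s0 v m. lst K s0 n = lst K s n \<and> v < s0 \<and> v + int m = s0 + int n \<and> sat_st M (lst K v m) \<psi>"
    by (intro exI[of _ "v + int i"] exI[of _ v] exI[of _ m]) auto
next
  assume n: "1 \<le> n"
  assume "\<exists>s0 v m. lst K s0 n = lst K s n \<and> v < s0 \<and> v + int m = s0 + int n \<and> sat_st M (lst K v m) \<psi>"
  then obtain s0 v m where e: "lst K s0 n = lst K s n" "v < s0" "v + int m = s0 + int n"
     "sat_st M (lst K v m) \<psi>" by blast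
  define i where "i = nat (s0 - v)"
  have i: "1 \<le> i" "i < m" "s0 = v + int i" "n = m - i" using e n unfolding i_def by auto
  have "is_trace M (lst K v m)" unfolding trM using i by (intro exI[of _ v] exI[of _ m]) auto
  moreover have "lst K s n \<in> Suff (lst K v m)" unfolding Suff_lst using e i
    by (intro CollectI exI[of _ i]) auto
  ultimately show "sat_st M (lst K s n) (Ebar \<psi>)" using e(4) unfolding sat_st.simps by blast
qed

end



lemma lst_allP: "int K + 1 \<le> s \<Longrightarrow> lst K s n = replicate n (Suc K)"
  by (rule nth_equalityI) (auto simp: stt_def)

lemma shift_st:
  assumes K: "1 \<le> K" "0 < T" "T \<le> int K" and n: "1 \<le> n" "1 \<le> n'"
    and R: "relT T [int K + 1, s, s + int n] [int K + 1, s', s' + int n']"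
    and e: "lst K s0 n = lst K s n"
  shows "\<exists>s0'. lst K s0' n' = lst K s' n' \<and>
           relT T [int K + 1, s0, s0 + int n] [int K + 1, s0', s0' + int n']"
proof -
  have R3: "eqT T (s - (int K + 1)) (s' - (int K + 1))"
           "eqT T (s + int n - (int K + 1)) (s' + int n' - (int K + 1))"
           "eqT T (s + int n - s) (s' + int n' - s')"
    using R by (simp_all add: relT3)
  from lst_eq[OF K(1) n(1) e] consider "s0 = s" | "s + int n \<le> 1 \<and> s0 + int n \<le> 1"
    | "int K + 1 \<le> s \<and> int K + 1 \<le> s0" by blast
  then show ?thesis
  proof cases
    case 1 then show ?thesis using R by blast
  next
    case 2
    have a: "s + int n - (int K + 1) \<le> -T" using 2 K by simp
    then have b: "s' + int n' - (int K + 1) \<le> -T" using R3(2) K(2) by (auto simp: eqT_def)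
    have "relT T [int K + 1, s0, s0 + int n] [int K + 1, s', s' + int n']"
      unfolding relT3 using R3(3) 2 K n b by (auto simp: eqT_def)
    then show ?thesis by blast
  next
    case 3
    have "0 \<le> s' - (int K + 1)" using eqT_nonneg[OF K(2) R3(1)] 3 by simp
    then have "lst K s0 n' = lst K s' n'" using 3 by (simp add: lst_allP)
    moreover have "relT T [int K + 1, s0, s0 + int n] [int K + 1, s0, s0 + int n']"
      unfolding relT3 using R3(3) 3 K n by (auto simp: eqT_def)
    ultimately show ?thesis by blast
  qed
qed

lemma pow2_pos: "0 < (2::int)^h" by simp

lemma st_ef:
  fixes \<phi> :: "'ap hs"
  assumes K1: "1 \<le> K" and Mdef: "M = SK K ini"
  shows "2^height \<phi> \<le> int K \<Longrightarrow>
    relT (2^height \<phi>) [int K + 1, s, s + int n] [int K + 1, s', s' + int n'] \<Longrightarrow>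
    1 \<le> n \<Longrightarrow> 1 \<le> n' \<Longrightarrow> sat_st M (lst K s n) \<phi> \<Longrightarrow> sat_st M (lst K s' n') \<phi>"
proof (induction \<phi> arbitrary: s n s' n')
  case (Prop p)
  have "eqT 1 (s - (int K + 1)) (s' - (int K + 1))" using Prop.prems(2) by (simp add: relT3)
  then show ?case using Prop.prems sat_prop_lst[OF K1 Mdef] eqT_nonneg[of 1] by fastforce
next
  case (Neg \<psi>)
  have "\<not> sat_st M (lst K s' n') \<psi>"
  proof
    assume "sat_st M (lst K s' n') \<psi>"
    then have "sat_st M (lst K s n) \<psi>"
      using Neg.IH[of s' n' s n] Neg.prems relT_sym by auto
    then show False using Neg.prems by simp
  qed
  then show ?case by simp
next
  case (And \<psi> \<chi>)
  have m1: "(2::int)^height \<psi> \<le> 2^height (And \<psi> \<chi>)" and m2: "(2::int)^height \<chi> \<le> 2^height (And \<psi> \<chi>)"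
    by (simp_all add: power_increasing)
  have k1: "(2::int)^height \<psi> \<le> int K" and k2: "(2::int)^height \<chi> \<le> int K"
    using m1 m2 And.prems(1) by linarith+
  have r1: "relT (2^height \<psi>) [int K + 1, s, s + int n] [int K + 1, s', s' + int n']"
    by (rule relT_mono[OF And.prems(2) m1])
  have r2: "relT (2^height \<chi>) [int K + 1, s, s + int n] [int K + 1, s', s' + int n']"
    by (rule relT_mono[OF And.prems(2) m2])
  show ?case using And.IH(1)[OF k1 r1] And.IH(2)[OF k2 r2] And.prems by auto
next
  case (Bm \<psi>)
  let ?T = "(2::int)^height \<psi>"
  have Tp: "0 < ?T" by simp
  have R2: "relT (2 * ?T) [int K + 1, s, s + int n] [int K + 1, s', s' + int n']" using Bm.prems by simp
  have kk: "?T \<le> int K" using Bm.prems(1) Tp by (simp only: height.simps power_Suc)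
  from Bm.prems(5) obtain m where m: "1 \<le> m" "m < n" "sat_st M (lst K s m) \<psi>"
    using sat_Bm_lst[OF K1 Mdef] by blast
  obtain y where y: "relT ?T [int K + 1, s, s + int n, s + int m] [int K + 1, s', s' + int n', y]"
    using relT_ext[OF Tp R2, of "s + int m"] by auto
  then have y4: "eqT ?T (s - (int K + 1)) (s' - (int K + 1))"
     "eqT ?T (s + int m - (int K + 1)) (y - (int K + 1))"
     "eqT ?T (s + int m - s) (y - s')" "eqT ?T (s + int m - (s + int n)) (y - (s' + int n'))"
    by (simp_all add: relT4)
  have y1: "0 < y - s'" using eqT_pos[OF Tp y4(3)] m by simp
  have y2: "y - (s' + int n') < 0" using eqT_negv[OF Tp y4(4)] m by simp
  define m' where "m' = nat (y - s')"
  have m': "1 \<le> m'" "m' < n'" "s' + int m' = y" using y1 y2 unfolding m'_def by auto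
  have "relT ?T [int K + 1, s, s + int m] [int K + 1, s', s' + int m']"
    unfolding relT3 using y4 m' by simp
  then have "sat_st M (lst K s' m') \<psi>"
    using Bm.IH[of s m s' m'] Bm.prems m m' kk by simp
  then show ?case using m' sat_Bm_lst[OF K1 Mdef] by blast
next
  case (Em \<psi>)
  let ?T = "(2::int)^height \<psi>"
  have Tp: "0 < ?T" by simp
  have R2: "relT (2 * ?T) [int K + 1, s, s + int n] [int K + 1, s', s' + int n']" using Em.prems by simp
  have kk: "?T \<le> int K" using Em.prems(1) Tp by (simp only: height.simps power_Suc)
  from Em.prems(5) obtain m where m: "1 \<le> m" "m < n" "sat_st M (lst K (s + int m) (n - m)) \<psi>"
    using sat_Em_lst[OF K1 Mdef] by blast
  obtain y where y: "relT ?T [int K + 1, s, s + int n, s + int m] [int K + 1, s', s' + int n', y]"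
    using relT_ext[OF Tp R2, of "s + int m"] by auto
  then have y4: "eqT ?T (s + int n - (int K + 1)) (s' + int n' - (int K + 1))"
     "eqT ?T (s + int m - (int K + 1)) (y - (int K + 1))"
     "eqT ?T (s + int m - s) (y - s')" "eqT ?T (s + int m - (s + int n)) (y - (s' + int n'))"
    by (simp_all add: relT4)
  have y1: "0 < y - s'" using eqT_pos[OF Tp y4(3)] m by simp
  have y2: "y - (s' + int n') < 0" using eqT_negv[OF Tp y4(4)] m by simp
  define m' where "m' = nat (y - s')"
  have m': "1 \<le> m'" "m' < n'" "s' + int m' = y" using y1 y2 unfolding m'_def by auto
  have rr: "relT ?T [int K + 1, s + int m, s + int n] [int K + 1, y, s' + int n']"
    unfolding relT3 using y4 by (simp add: eqT_neg)
  have q1: "s + int m + int (n - m) = s + int n" and q2: "s' + int m' + int (n' - m') = s' + int n'"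
    using m m' by auto
  have "relT ?T [int K + 1, s + int m, s + int m + int (n - m)] [int K + 1, s' + int m', s' + int m' + int (n' - m')]"
    unfolding q1 q2 unfolding m'(3) by (rule rr)
  then have "sat_st M (lst K (s' + int m') (n' - m')) \<psi>"
    using Em.IH[of "s + int m" "n - m" "s' + int m'" "n' - m'"] Em.prems m m' kk by simp
  then show ?case using m' sat_Em_lst[OF K1 Mdef] by blast
next
  case (Bbar \<psi>)
  let ?T = "(2::int)^height \<psi>"
  have Tp: "0 < ?T" by simp
  have R2: "relT (2 * ?T) [int K + 1, s, s + int n] [int K + 1, s', s' + int n']" using Bbar.prems by simp
  have kk: "?T \<le> int K" using Bbar.prems(1) Tp by (simp only: height.simps power_Suc)
  from Bbar.prems(5) obtain s0 m where m: "lst K s0 n = lst K s n" "n < m" "sat_st M (lst K s0 m) \<psi>"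
    using sat_Bbar_lst[OF K1 Mdef Bbar.prems(3)] by blast
  obtain s0' where s0': "lst K s0' n' = lst K s' n'"
    "relT (2 * ?T) [int K + 1, s0, s0 + int n] [int K + 1, s0', s0' + int n']"
    using shift_st[OF K1 _ _ Bbar.prems(3,4) R2 m(1)] Bbar.prems(1) by auto
  obtain y where y: "relT ?T [int K + 1, s0, s0 + int n, s0 + int m] [int K + 1, s0', s0' + int n', y]"
    using relT_ext[OF Tp s0'(2), of "s0 + int m"] by auto
  then have y4: "eqT ?T (s0 - (int K + 1)) (s0' - (int K + 1))"
     "eqT ?T (s0 + int m - (int K + 1)) (y - (int K + 1))"
     "eqT ?T (s0 + int m - s0) (y - s0')" "eqT ?T (s0 + int m - (s0 + int n)) (y - (s0' + int n'))"
    by (simp_all add: relT4)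
  have y2: "0 < y - (s0' + int n')" using eqT_pos[OF Tp y4(4)] m by simp
  define m' where "m' = nat (y - s0')"
  have m': "n' < m'" "s0' + int m' = y" using y2 Bbar.prems(4) unfolding m'_def by auto
  have "relT ?T [int K + 1, s0, s0 + int m] [int K + 1, s0', s0' + int m']"
    unfolding relT3 using y4 m' by simp
  then have "sat_st M (lst K s0' m') \<psi>"
    using Bbar.IH[of s0 m s0' m'] Bbar.prems m m' kk by simp
  then show ?case using m' s0'(1) sat_Bbar_lst[OF K1 Mdef Bbar.prems(4)] by blast
next
  case (Ebar \<psi>)
  let ?T = "(2::int)^height \<psi>"
  have Tp: "0 < ?T" by simp
  have R2: "relT (2 * ?T) [int K + 1, s, s + int n] [int K + 1, s', s' + int n']" using Ebar.prems by simp
  have kk: "?T \<le> int K" using Ebar.prems(1) Tp by (simp only: height.simps power_Suc)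
  from Ebar.prems(5) obtain s0 v m where m: "lst K s0 n = lst K s n" "v < s0" "v + int m = s0 + int n"
      "sat_st M (lst K v m) \<psi>"
    using sat_Ebar_lst[OF K1 Mdef Ebar.prems(3)] by blast
  obtain s0' where s0': "lst K s0' n' = lst K s' n'"
    "relT (2 * ?T) [int K + 1, s0, s0 + int n] [int K + 1, s0', s0' + int n']"
    using shift_st[OF K1 _ _ Ebar.prems(3,4) R2 m(1)] Ebar.prems(1) by auto
  obtain y where y: "relT ?T [int K + 1, s0, s0 + int n, v] [int K + 1, s0', s0' + int n', y]"
    using relT_ext[OF Tp s0'(2), of v] by auto
  then have y4: "eqT ?T (s0 + int n - (int K + 1)) (s0' + int n' - (int K + 1))"
     "eqT ?T (v - (int K + 1)) (y - (int K + 1))"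
     "eqT ?T (v - s0) (y - s0')" "eqT ?T (v - (s0 + int n)) (y - (s0' + int n'))"
    by (simp_all add: relT4)
  have y2: "y - s0' < 0" using eqT_negv[OF Tp y4(3)] m by simp
  define m' where "m' = nat (s0' + int n' - y)"
  have m': "1 \<le> m'" "y + int m' = s0' + int n'" using y2 Ebar.prems(4) unfolding m'_def by auto
  have "relT ?T [int K + 1, v, v + int m] [int K + 1, y, y + int m']"
    unfolding relT3 using y4 m' m by (simp add: eqT_neg)
  then have "sat_st M (lst K y m') \<psi>"
    using Ebar.IH[of v m y m'] Ebar.prems m m' kk by simp
  then show ?case using m' y2 s0'(1) sat_Ebar_lst[OF K1 Mdef Ebar.prems(4)] by fastforce
qed



lemma sat_SK_ini: "sat_st (SK K a) \<rho> \<phi> \<longleftrightarrow> sat_st (SK K b) \<rho> \<phi>"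
proof -
  have tr: "is_trace (SK K a :: (nat,'ap) kripke) = is_trace (SK K b :: (nat,'ap) kripke)"
    by (simp add: is_trace_def is_inf_path_def fun_eq_iff)
  show ?thesis
    by (induction \<phi> arbitrary: \<rho>) (simp_all add: tr)
qed

lemma init_SK:
  assumes K: "1 \<le> K"
  shows "is_init_trace (SK K ini :: (nat,'ap) kripke) \<rho> \<longleftrightarrow> (\<exists>s n. 1 \<le> n \<and> \<rho> = lst K s n \<and> stt K s = ini)"
  unfolding is_init_trace_def trace_SK[OF K] by (auto simp: hd_lst) blast

lemma stt_eq1: "1 \<le> K \<Longrightarrow> stt K s = 1 \<longleftrightarrow> s = 1"
  by (auto simp: stt_def)



lemma cover_A:
  assumes T: "0 < T" "2*T \<le> int K" and n: "1 \<le> n"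
  shows "\<exists>s' n'. s' \<le> 0 \<and> 1 \<le> n' \<and> relT T [int K + 1, 1, 1 + int n] [int K + 1, s', s' + int n']"
proof (cases "1 + int n \<le> int K + 1 - T")
  case True
  have "relT T [int K + 1, 1, 1 + int n] [int K + 1, 0, 0 + int n]"
    unfolding relT3 eqT_def using T True by auto
  then show ?thesis using n by blast
next
  case False
  have "relT T [int K + 1, 1, 1 + int n] [int K + 1, 0, 0 + int (n + 1)]"
    unfolding relT3 eqT_def using T False by auto
  then show ?thesis using n by (intro exI[of _ 0] exI[of _ "n+1"]) auto
qed

lemma cover_B:
  assumes T: "0 < T" "2*T \<le> int K" and n: "1 \<le> n'" "s' \<le> 0"
  shows "\<exists>n. 1 \<le> n \<and> relT T [int K + 1, 1, 1 + int n] [int K + 1, s', s' + int n']"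
proof (cases "s' + int n' \<le> int K + 1 - T")
  case True
  define n where "n = min n' (nat T)"
  have "relT T [int K + 1, 1, 1 + int n] [int K + 1, s', s' + int n']"
    unfolding relT3 eqT_def n_def using T True n by auto
  moreover have "1 \<le> n" unfolding n_def using n T by auto
  ultimately show ?thesis by blast
next
  case False
  define n where "n = nat (s' + int n' - 1)"
  have "relT T [int K + 1, 1, 1 + int n] [int K + 1, s', s' + int n']"
    unfolding relT3 eqT_def n_def using T False n by auto
  moreover have "1 \<le> n" unfolding n_def using T False by auto
  ultimately show ?thesis by blast
qed



lemma st_models_eq:
  fixes \<phi> :: "'ap hs"
  assumes K: "K = 2^Suc (height \<phi>)"
  shows "models_st (SK K 1 :: (nat,'ap) kripke) \<phi> \<longleftrightarrow> models_st (SK K 0 :: (nat,'ap) kripke) \<phi>"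
proof -
  let ?T = "(2::int)^height \<phi>"
  have Tp: "0 < ?T" by simp
  have KT: "int K = 2 * ?T" using K by simp
  have K1: "1 \<le> K" using K by simp
  have KT1: "?T \<le> int K" "2 * ?T \<le> int K" using KT Tp by auto
  let ?M = "SK K 0 :: (nat,'ap) kripke"
  have ef: "\<And>s n s' n'. relT ?T [int K + 1, s, s + int n] [int K + 1, s', s' + int n'] \<Longrightarrow>
     1 \<le> n \<Longrightarrow> 1 \<le> n' \<Longrightarrow> sat_st ?M (lst K s n) \<phi> \<Longrightarrow> sat_st ?M (lst K s' n') \<phi>"
    using st_ef[OF K1 refl] KT1 by blast
  show ?thesis
  proof
    assume A: "models_st (SK K 1 :: (nat,'ap) kripke) \<phi>"
    show "models_st ?M \<phi>" unfolding models_st_def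
    proof (intro allI impI)
      fix \<rho> assume "is_init_trace ?M \<rho>"
      then obtain s' n' where sn: "1 \<le> n'" "\<rho> = lst K s' n'" "stt K s' = 0"
        using init_SK[OF K1] by blast
      then have s0: "s' \<le> 0" by (simp add: stt_eq0)
      obtain n where n: "1 \<le> n" "relT ?T [int K + 1, 1, 1 + int n] [int K + 1, s', s' + int n']"
        using cover_B[OF Tp KT1(2) sn(1) s0] by blast
      have "is_init_trace (SK K 1 :: (nat,'ap) kripke) (lst K 1 n)"
        unfolding init_SK[OF K1] using n(1) K1 by (intro exI[of _ 1] exI[of _ n]) (simp add: stt_def)
      then have "sat_st (SK K 1 :: (nat,'ap) kripke) (lst K 1 n) \<phi>" using A by (simp add: models_st_def)
      then have "sat_st ?M (lst K 1 n) \<phi>" using sat_SK_ini by blast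
      then show "sat_st ?M \<rho> \<phi>" using ef[OF n(2) n(1) sn(1)] sn(2) by simp
    qed
  next
    assume A: "models_st ?M \<phi>"
    show "models_st (SK K 1 :: (nat,'ap) kripke) \<phi>" unfolding models_st_def
    proof (intro allI impI)
      fix \<rho> assume "is_init_trace (SK K 1 :: (nat,'ap) kripke) \<rho>"
      then obtain s n where sn: "1 \<le> n" "\<rho> = lst K s n" "stt K s = 1"
        using init_SK[OF K1] by blast
      then have s1: "s = 1" using stt_eq1[OF K1, of s] by simp
      obtain s' n' where n: "s' \<le> 0" "1 \<le> n'" "relT ?T [int K + 1, 1, 1 + int n] [int K + 1, s', s' + int n']"
        using cover_A[OF Tp KT1(2) sn(1)] by blast
      have "is_init_trace ?M (lst K s' n')"
        unfolding init_SK[OF K1] using n by (intro exI[of _ s'] exI[of _ n']) (simp add: stt_eq0)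
      then have "sat_st ?M (lst K s' n') \<phi>" using A by (simp add: models_st_def)
      then have "sat_st ?M (lst K 1 n) \<phi>" using ef[OF relT_sym[OF n(3)] n(2) sn(1)] by simp
      then show "sat_st (SK K 1 :: (nat,'ap) kripke) \<rho> \<phi>" using sat_SK_ini sn(2) s1 by blast
    qed
  qed
qed



definition tt :: "'ap \<Rightarrow> 'ap hs" where "tt a = Neg (And (Prop a) (Neg (Prop a)))"
definition psiF :: "'ap \<Rightarrow> 'ap hs" where "psiF a = Bbar (Em (And (Neg (Bm (tt a))) (Prop a)))"

lemma lin_top[simp]: "sat_lin K \<pi> x y (tt a)"
  by (auto simp: tt_def)

lemma lin_psiF: "sat_lin K \<pi> x y (psiF a) \<longleftrightarrow> (\<exists>z>y. x < z \<and> a \<in> Lab K (\<pi> z))"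
  unfolding psiF_def by (auto simp: not_less) (metis order.refl order_antisym)+

lemma path_SK1:
  assumes K: "1 \<le> K" and p: "is_inf_path (SK K 1 :: (nat,'ap) kripke) \<pi>" and p0: "\<pi> 0 = 1"
  shows "\<pi> t = stt K (1 + int t)"
proof -
  obtain s where s: "\<forall>u\<le>t. \<pi> u = stt K (s + int u)" using path_rep[OF K p] by blast
  then have "stt K s = 1" using p0 by (metis add.right_neutral of_nat_0 zero_le)
  then have "s = 1" using stt_eq1[OF K] by blast
  then show ?thesis using s by simp
qed

lemma lin_SK1: "1 \<le> K \<Longrightarrow> models_lin (SK K 1 :: (nat,'ap) kripke) (psiF a)"
  unfolding models_lin_def
proof (intro allI impI)
  fix \<pi> i assume K: "1 \<le> K" and p: "is_inf_path (SK K 1 :: (nat,'ap) kripke) \<pi> \<and> \<pi> 0 = Init (SK K 1 :: (nat,'ap) kripke)"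
  have pt: "\<pi> (i + K + 1) = stt K (1 + int (i + K + 1))" by (rule path_SK1[OF K]) (use p in auto)
  have "stt K (1 + int (i + K + 1)) = Suc K" by (simp add: stt_def)
  with pt have "\<pi> (i + K + 1) = Suc K" by simp
  then show "sat_lin (SK K 1 :: (nat,'ap) kripke) \<pi> 0 i (psiF a)"
    unfolding lin_psiF by (intro exI[of _ "i + K + 1"]) auto
qed

lemma lin_SK0: "\<not> models_lin (SK K 0 :: (nat,'ap) kripke) (psiF a)"
proof -
  have "is_inf_path (SK K 0 :: (nat,'ap) kripke) (\<lambda>_. 0)" by (simp add: is_inf_path_def)
  moreover have "\<not> sat_lin (SK K 0 :: (nat,'ap) kripke) (\<lambda>_. 0) 0 0 (psiF a)"
    unfolding lin_psiF by simp
  ultimately show ?thesis unfolding models_lin_def by force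
qed

lemma succ_SK: "s \<le> Suc K \<Longrightarrow> \<exists>t. (s,t) \<in> Tr (SK K ini)"
proof -
  assume "s \<le> Suc K"
  then consider "s = 0" | "s = Suc K" | "1 \<le> s \<and> s \<le> K" by linarith
  then show ?thesis
  proof cases
    case 1 then show ?thesis by (intro exI[of _ 0]) simp
  next
    case 2 then show ?thesis by (intro exI[of _ "Suc K"]) simp
  next
    case 3 then show ?thesis by (intro exI[of _ "Suc s"]) auto
  qed
qed

lemma finite_SK: "finite_kripke (SK K ini) \<longleftrightarrow> ini \<le> Suc K"
  unfolding finite_kripke_def wf_kripke_def using succ_SK by auto



lemma B_st: "\<not> expr_geq (models_st :: ('ap::finite) semantics) models_lin"
proof
  assume "expr_geq (models_st :: ('ap::finite) semantics) models_lin"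
  then obtain \<phi> :: "'ap hs" where eq: "expr_equiv models_st \<phi> models_lin (psiF undefined)"
    unfolding expr_geq_def by blast
  define K where "K = (2::nat)^Suc (height \<phi>)"
  have K1: "1 \<le> K" unfolding K_def by simp
  have f1: "finite_kripke (SK K 1 :: (nat,'ap) kripke)" and f0: "finite_kripke (SK K 0 :: (nat,'ap) kripke)"
    by (simp_all add: finite_SK)
  have "models_st (SK K 1 :: (nat,'ap) kripke) \<phi>"
    using eq[unfolded expr_equiv_def, rule_format, OF f1] lin_SK1[OF K1] by simp
  moreover have "\<not> models_st (SK K 0 :: (nat,'ap) kripke) \<phi>"
    using eq[unfolded expr_equiv_def, rule_format, OF f0] lin_SK0 by simp
  ultimately show False using st_models_eq[OF K_def] by blast
qed




lemma relT_sub: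
  assumes R: "relT T xs ys" and idx: "\<forall>i\<in>set idx. i < length xs"
  shows "relT T (map ((!) xs) idx) (map ((!) ys) idx)"
  using R idx unfolding relT_def by auto

lemma relT2: "relT T [a,b] [a',b'] \<longleftrightarrow> eqT T (b-a) (b'-a')"
  unfolding relT_list_iff by (auto simp: eqT_0 eqT_neg)

lemma ct_path_props:
  assumes p: "is_inf_path (comp_tree K) \<pi>"
  shows "\<exists>t. \<pi> (Suc i) = \<pi> i @ [t]" "is_init_trace K (\<pi> i)"
  using p[unfolded is_inf_path_def, rule_format, of i] by (auto simp: comp_tree_def)

lemma ct_path_len:
  assumes p: "is_inf_path (comp_tree K) \<pi>"
  shows "length (\<pi> i) = length (\<pi> 0) + i"
proof (induction i)
  case (Suc i)
  obtain t where "\<pi> (Suc i) = \<pi> i @ [t]" using ct_path_props(1)[OF p] by blast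
  then show ?case using Suc by simp
qed simp

lemma ct_path_take:
  assumes p: "is_inf_path (comp_tree K) \<pi>" and ij: "i \<le> j"
  shows "take (length (\<pi> i)) (\<pi> j) = \<pi> i"
  using ij
proof (induction j)
  case 0 then show ?case by simp
next
  case (Suc j)
  obtain t where t: "\<pi> (Suc j) = \<pi> j @ [t]" using ct_path_props(1)[OF p] by blast
  show ?case
  proof (cases "i = Suc j")
    case True then show ?thesis by simp
  next
    case False
    then have "i \<le> j" using Suc by simp
    moreover have "length (\<pi> i) \<le> length (\<pi> j)" using ct_path_len[OF p, of i] ct_path_len[OF p, of j] \<open>i \<le> j\<close> by simp
    ultimately show ?thesis using Suc t by simp
  qed
qed

lemma ct_trace:
  "is_trace (comp_tree K) \<rho> \<longleftrightarrow>
   (\<exists>h k. is_init_trace K h \<and> 1 \<le> k \<and> k \<le> length h \<and> \<rho> = map (\<lambda>j. take j h) [k..<Suc (length h)])"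
proof
  assume "is_trace (comp_tree K) \<rho>"
  then obtain \<pi> where ne: "\<rho> \<noteq> []" and p: "is_inf_path (comp_tree K) \<pi>"
    and r: "\<rho> = map \<pi> [0..<length \<rho>]" unfolding is_trace_def by blast
  define n where "n = length \<rho>"
  define k where "k = length (\<pi> 0)"
  define h where "h = \<pi> (n - 1)"
  have n1: "1 \<le> n" using ne unfolding n_def by (cases \<rho>) auto
  have lh: "length h = k + n - 1" unfolding h_def k_def using ct_path_len[OF p, of "n-1"] n1 by simp
  have it: "is_init_trace K (\<pi> 0)" using ct_path_props(2)[OF p] .
  then have k1: "1 \<le> k" unfolding k_def is_init_trace_def is_trace_def by (cases "\<pi> 0") auto
  have ih: "is_init_trace K h" unfolding h_def using ct_path_props(2)[OF p] .
  have "\<rho> = map (\<lambda>j. take j h) [k..<Suc (length h)]"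
  proof (rule nth_equalityI)
    show "length \<rho> = length (map (\<lambda>j. take j h) [k..<Suc (length h)])"
      using lh n1 k1 unfolding n_def by simp
  next
    fix i assume i: "i < length \<rho>"
    have "\<rho> ! i = \<pi> i" using i by (subst r) simp
    also have "\<dots> = take (length (\<pi> i)) h" unfolding h_def
      using ct_path_take[OF p, of i "n-1"] i unfolding n_def by simp
    also have "\<dots> = take (k + i) h" using ct_path_len[OF p, of i] unfolding k_def by simp
    finally show "\<rho> ! i = map (\<lambda>j. take j h) [k..<Suc (length h)] ! i"
      using i lh n1 k1 unfolding n_def by (simp add: nth_map_upt)
  qed
  then show "\<exists>h k. is_init_trace K h \<and> 1 \<le> k \<and> k \<le> length h \<and> \<rho> = map (\<lambda>j. take j h) [k..<Suc (length h)]"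
    using ih k1 lh n1 by (intro exI[of _ h] exI[of _ k]) auto
next
  assume "\<exists>h k. is_init_trace K h \<and> 1 \<le> k \<and> k \<le> length h \<and> \<rho> = map (\<lambda>j. take j h) [k..<Suc (length h)]"
  then obtain h k where ih: "is_init_trace K h" and k: "1 \<le> k" "k \<le> length h"
    and r: "\<rho> = map (\<lambda>j. take j h) [k..<Suc (length h)]" by blast
  from ih obtain \<sigma> where hne: "h \<noteq> []" and sp: "is_inf_path K \<sigma>" and hs: "h = map \<sigma> [0..<length h]"
    and hd: "hd h = Init K" unfolding is_init_trace_def is_trace_def by blast
  have s0: "\<sigma> 0 = Init K" using hd hne by (subst (asm) hs) (simp add: hd_map)
  have init: "is_init_trace K (map \<sigma> [0..<m])" if "1 \<le> m" for m
    unfolding is_init_trace_def is_trace_def using that sp s0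
    by (auto simp: hd_map intro!: exI[of _ \<sigma>])
  define \<pi> where "\<pi> = (\<lambda>i. map \<sigma> [0..<k + i])"
  have "is_inf_path (comp_tree K) \<pi>"
    unfolding is_inf_path_def
  proof
    fix i
    have "\<pi> (Suc i) = \<pi> i @ [\<sigma> (k + i)]" unfolding \<pi>_def by simp
    moreover have "is_init_trace K (\<pi> i)" using init k by (simp add: \<pi>_def)
    moreover have "is_init_trace K (\<pi> i @ [\<sigma> (k + i)])"
      using init[of "Suc (k + i)"] by (simp add: \<pi>_def)
    ultimately show "(\<pi> i, \<pi> (Suc i)) \<in> Tr (comp_tree K)" unfolding comp_tree_def by auto
  qed
  moreover have "\<rho> = map \<pi> [0..<length \<rho>]"
  proof (rule nth_equalityI)
    fix i assume i: "i < length \<rho>"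
    then have ki: "k + i \<le> length h" using r k by simp
    have "take (k + i) h = map \<sigma> [0..<k + i]" using ki by (subst hs) (simp add: take_map)
    moreover have "\<rho> ! i = take (k + i) h"
      using i r k by (simp del: upt_Suc add: nth_map_upt)
    moreover have "map \<pi> [0..<length \<rho>] ! i = map \<sigma> [0..<k + i]"
      using i unfolding \<pi>_def by (simp del: upt_Suc)
    ultimately show "\<rho> ! i = map \<pi> [0..<length \<rho>] ! i" by simp
  qed simp
  moreover have "\<rho> \<noteq> []" using r k by simp
  ultimately show "is_trace (comp_tree K) \<rho>" unfolding is_trace_def by blast
qed

definition ctl :: "nat \<Rightarrow> int \<Rightarrow> nat \<Rightarrow> nat \<Rightarrow> nat list list" where
  "ctl K s a b = map (lst K s) [a..<b]"

lemma ct_trace_SK: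
  assumes K: "1 \<le> K"
  shows "is_trace (comp_tree (SK K ini :: (nat,'ap) kripke)) \<rho> \<longleftrightarrow>
    (\<exists>s a b. stt K s = ini \<and> 1 \<le> a \<and> a < b \<and> \<rho> = ctl K s a b)"
  unfolding ct_trace init_SK[OF K]
proof
  assume "\<exists>h k. (\<exists>s n. 1 \<le> n \<and> h = lst K s n \<and> stt K s = ini) \<and>
      1 \<le> k \<and> k \<le> length h \<and> \<rho> = map (\<lambda>j. take j h) [k..<Suc (length h)]"
  then obtain s n k where a: "1 \<le> n" "stt K s = ini" "1 \<le> k" "k \<le> n"
     "\<rho> = map (\<lambda>j. take j (lst K s n)) [k..<Suc n]" by auto
  have "\<rho> = ctl K s k (Suc n)" unfolding a(5) ctl_def
    by (rule map_cong) (auto simp: take_lst)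
  then show "\<exists>s a b. stt K s = ini \<and> 1 \<le> a \<and> a < b \<and> \<rho> = ctl K s a b"
    using a by (intro exI[of _ s] exI[of _ k] exI[of _ "Suc n"]) auto
next
  assume "\<exists>s a b. stt K s = ini \<and> 1 \<le> a \<and> a < b \<and> \<rho> = ctl K s a b"
  then obtain s a b where a: "stt K s = ini" "1 \<le> a" "a < b" "\<rho> = ctl K s a b" by blast
  have "\<rho> = map (\<lambda>j. take j (lst K s (b - 1))) [a..<Suc (b - 1)]"
    unfolding a(4) ctl_def using a by (intro map_cong) (auto simp: take_lst)
  then show "\<exists>h k. (\<exists>s n. 1 \<le> n \<and> h = lst K s n \<and> stt K s = ini) \<and>
      1 \<le> k \<and> k \<le> length h \<and> \<rho> = map (\<lambda>j. take j h) [k..<Suc (length h)]"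
    using a by (intro exI[of _ "lst K s (b - 1)"] exI[of _ a] conjI exI[of _ s] exI[of _ "b - 1"]) auto
qed



lemma ctl_len[simp]: "length (ctl K s a b) = b - a" by (simp add: ctl_def)
lemma ctl_nth: "i < b - a \<Longrightarrow> ctl K s a b ! i = lst K s (a + i)" by (simp add: ctl_def)
lemma take_ctl: "i \<le> b - a \<Longrightarrow> take i (ctl K s a b) = ctl K s a (a + i)"
  by (cases "a \<le> b") (auto simp: ctl_def take_map take_upt)
lemma drop_ctl: "drop i (ctl K s a b) = ctl K s (a + i) b"
  by (simp add: ctl_def drop_map)

lemma Pref_ctl: "a < b \<Longrightarrow> Pref (ctl K s a b) = {ctl K s a c | c. a < c \<and> c < b}"
  unfolding Pref_def
proof (intro set_eqI iffI)
  fix x assume "x \<in> {take i (ctl K s a b) |i. 1 \<le> i \<and> i < length (ctl K s a b)}"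
  then obtain i where "x = take i (ctl K s a b)" "1 \<le> i" "i < b - a" by auto
  then show "x \<in> {ctl K s a c |c. a < c \<and> c < b}"
    by (intro CollectI exI[of _ "a + i"]) (auto simp: take_ctl)
next
  fix x assume "x \<in> {ctl K s a c |c. a < c \<and> c < b}"
  then obtain c where "x = ctl K s a c" "a < c" "c < b" by blast
  then show "x \<in> {take i (ctl K s a b) |i. 1 \<le> i \<and> i < length (ctl K s a b)}"
    by (intro CollectI exI[of _ "c - a"]) (auto simp: take_ctl)
qed

lemma Suff_ctl: "Suff (ctl K s a b) = {ctl K s c b | c. a < c \<and> c < b}"
  unfolding Suff_def
proof (intro set_eqI iffI)
  fix x assume "x \<in> {drop i (ctl K s a b) |i. 1 \<le> i \<and> i < length (ctl K s a b)}"
  then obtain i where "x = drop i (ctl K s a b)" "1 \<le> i" "i < b - a" by auto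
  then show "x \<in> {ctl K s c b |c. a < c \<and> c < b}"
    by (intro CollectI exI[of _ "a + i"]) (auto simp: drop_ctl)
next
  fix x assume "x \<in> {ctl K s c b |c. a < c \<and> c < b}"
  then obtain c where "x = ctl K s c b" "a < c" "c < b" by blast
  then show "x \<in> {drop i (ctl K s a b) |i. 1 \<le> i \<and> i < length (ctl K s a b)}"
    by (intro CollectI exI[of _ "c - a"]) (auto simp: drop_ctl)
qed

lemma ctl_eq:
  assumes "a < b" "a2 < c" and e: "ctl K s a b = ctl K s2 a2 c"
  shows "a2 = a \<and> c = b \<and> lst K s2 (b - 1) = lst K s (b - 1)"
proof -
  have l: "b - a = c - a2" using e by (metis ctl_len)
  have "lst K s a = lst K s2 a2" using e ctl_nth[of 0 b a K s] ctl_nth[of 0 c a2 K s2] assms by simp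
  then have a: "a2 = a" by (metis length_lst)
  with l assms have c: "c = b" by simp
  have i: "b - a - 1 < b - a" and ab: "a + (b - a - 1) = b - 1" using assms by auto
  have "ctl K s a b ! (b - a - 1) = ctl K s2 a2 c ! (b - a - 1)" using e by simp
  then have "lst K s (a + (b - a - 1)) = lst K s2 (a + (b - a - 1))"
    using ctl_nth[OF i, of K s] ctl_nth[of "b - a - 1" c a2 K s2] i a c by simp
  then have "lst K s (b - 1) = lst K s2 (b - 1)" unfolding ab .
  then show ?thesis using a c by simp
qed

lemma ctl_cong: "lst K s0 (b - 1) = lst K s (b - 1) \<Longrightarrow> ctl K s0 a b = ctl K s a b"
  unfolding ctl_def
proof (rule map_cong)
  fix j assume e: "lst K s0 (b - 1) = lst K s (b - 1)" and j: "j \<in> set [a..<b]"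
  have jb: "j \<le> b - 1" using j by auto
  have "lst K s0 j = take j (lst K s0 (b - 1))" using jb by (simp add: take_lst)
  also have "\<dots> = take j (lst K s (b - 1))" using e by simp
  also have "\<dots> = lst K s j" using jb by (simp add: take_lst)
  finally show "lst K s0 j = lst K s j" .
qed simp

context
  fixes K :: nat and ini :: nat and C :: "(nat list, 'ap) kripke"
  assumes K1: "1 \<le> K" and Cdef: "C = comp_tree (SK K ini)"
begin

lemma trC: "is_trace C \<rho> \<longleftrightarrow> (\<exists>s a b. stt K s = ini \<and> 1 \<le> a \<and> a < b \<and> \<rho> = ctl K s a b)"
  using ct_trace_SK[OF K1, where ini=ini and 'ap='ap] Cdef by simp

lemma ct_prop: "1 \<le> a \<Longrightarrow> a < b \<Longrightarrow> sat_st C (ctl K s a b) (Prop p) \<longleftrightarrow> int K + 1 \<le> s + int a - 1"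
proof -
  assume a: "1 \<le> a" "a < b"
  have "sat_st C (ctl K s a b) (Prop p) \<longleftrightarrow> (\<forall>j\<in>{a..<b}. stt K (s + int j - 1) = Suc K)"
    using a by (auto simp: ctl_def Cdef comp_tree_def last_lst)
  also have "\<dots> \<longleftrightarrow> int K + 1 \<le> s + int a - 1"
  proof
    assume "\<forall>j\<in>{a..<b}. stt K (s + int j - 1) = Suc K"
    then have "stt K (s + int a - 1) = Suc K" using a by auto
    then show "int K + 1 \<le> s + int a - 1" by (simp add: stt_eq_SucK)
  qed (auto simp: stt_eq_SucK)
  finally show ?thesis .
qed

lemma ct_Bm: "a < b \<Longrightarrow> sat_st C (ctl K s a b) (Bm \<psi>) \<longleftrightarrow> (\<exists>c. a < c \<and> c < b \<and> sat_st C (ctl K s a c) \<psi>)"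
  by (auto simp: Pref_ctl)

lemma ct_Em: "sat_st C (ctl K s a b) (Em \<psi>) \<longleftrightarrow> (\<exists>c. a < c \<and> c < b \<and> sat_st C (ctl K s c b) \<psi>)"
  by (auto simp: Suff_ctl)

lemma ct_Bbar: "1 \<le> a \<Longrightarrow> a < b \<Longrightarrow> sat_st C (ctl K s a b) (Bbar \<psi>) \<longleftrightarrow>
  (\<exists>s0 d. stt K s0 = ini \<and> lst K s0 (b - 1) = lst K s (b - 1) \<and> b < d \<and> sat_st C (ctl K s0 a d) \<psi>)"
proof
  assume a: "1 \<le> a" "a < b" and "sat_st C (ctl K s a b) (Bbar \<psi>)"
  then obtain \<rho>' where t: "is_trace C \<rho>'" and p: "ctl K s a b \<in> Pref \<rho>'" and sa: "sat_st C \<rho>' \<psi>"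
    unfolding sat_st.simps by blast
  from t obtain s2 a2 d where r: "stt K s2 = ini" "1 \<le> a2" "a2 < d" "\<rho>' = ctl K s2 a2 d"
    unfolding trC by blast
  from p r obtain c where c: "a2 < c" "c < d" "ctl K s a b = ctl K s2 a2 c" by (auto simp: Pref_ctl)
  from ctl_eq[OF a(2) c(1) c(3)] have "a2 = a" "c = b" "lst K s2 (b - 1) = lst K s (b - 1)" by auto
  then show "\<exists>s0 d. stt K s0 = ini \<and> lst K s0 (b - 1) = lst K s (b - 1) \<and> b < d \<and> sat_st C (ctl K s0 a d) \<psi>"
    using r c sa by (intro exI[of _ s2] exI[of _ d]) auto
next
  assume a: "1 \<le> a" "a < b"
    and "\<exists>s0 d. stt K s0 = ini \<and> lst K s0 (b - 1) = lst K s (b - 1) \<and> b < d \<and> sat_st C (ctl K s0 a d) \<psi>"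
  then obtain s0 d where e: "stt K s0 = ini" "lst K s0 (b - 1) = lst K s (b - 1)" "b < d"
    "sat_st C (ctl K s0 a d) \<psi>" by blast
  have "is_trace C (ctl K s0 a d)" unfolding trC using e a
    by (intro exI[of _ s0] exI[of _ a] exI[of _ d]) auto
  moreover have ad: "a < d" using e a by simp
  moreover have "ctl K s a b \<in> Pref (ctl K s0 a d)" unfolding Pref_ctl[OF ad] using e a ctl_cong[OF e(2), of a]
    by (intro CollectI exI[of _ b]) auto
  ultimately show "sat_st C (ctl K s a b) (Bbar \<psi>)" using e(4) unfolding sat_st.simps by blast
qed

lemma ct_Ebar: "1 \<le> a \<Longrightarrow> a < b \<Longrightarrow> sat_st C (ctl K s a b) (Ebar \<psi>) \<longleftrightarrow>
  (\<exists>s0 v. stt K s0 = ini \<and> lst K s0 (b - 1) = lst K s (b - 1) \<and> 1 \<le> v \<and> v < a \<and> sat_st C (ctl K s0 v b) \<psi>)"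
proof
  assume a: "1 \<le> a" "a < b" and "sat_st C (ctl K s a b) (Ebar \<psi>)"
  then obtain \<rho>' where t: "is_trace C \<rho>'" and p: "ctl K s a b \<in> Suff \<rho>'" and sa: "sat_st C \<rho>' \<psi>"
    unfolding sat_st.simps by blast
  from t obtain s2 a2 d where r: "stt K s2 = ini" "1 \<le> a2" "a2 < d" "\<rho>' = ctl K s2 a2 d"
    unfolding trC by blast
  from p r obtain c where c: "a2 < c" "c < d" "ctl K s a b = ctl K s2 c d" by (auto simp: Suff_ctl)
  from ctl_eq[OF a(2) c(2) c(3)] have "c = a" "d = b" "lst K s2 (b - 1) = lst K s (b - 1)" by auto
  then show "\<exists>s0 v. stt K s0 = ini \<and> lst K s0 (b - 1) = lst K s (b - 1) \<and> 1 \<le> v \<and> v < a \<and> sat_st C (ctl K s0 v b) \<psi>"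
    using r c sa by (intro exI[of _ s2] exI[of _ a2]) auto
next
  assume a: "1 \<le> a" "a < b"
    and "\<exists>s0 v. stt K s0 = ini \<and> lst K s0 (b - 1) = lst K s (b - 1) \<and> 1 \<le> v \<and> v < a \<and> sat_st C (ctl K s0 v b) \<psi>"
  then obtain s0 v where e: "stt K s0 = ini" "lst K s0 (b - 1) = lst K s (b - 1)" "1 \<le> v" "v < a"
    "sat_st C (ctl K s0 v b) \<psi>" by blast
  have "is_trace C (ctl K s0 v b)" unfolding trC using e a
    by (intro exI[of _ s0] exI[of _ v] exI[of _ b]) auto
  moreover have "ctl K s a b \<in> Suff (ctl K s0 v b)" unfolding Suff_ctl using e a ctl_cong[OF e(2), of a]
    by (intro CollectI exI[of _ a]) auto
  ultimately show "sat_st C (ctl K s a b) (Ebar \<psi>)" using e(5) unfolding sat_st.simps by blast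
qed

end



definition cpts :: "nat \<Rightarrow> int \<Rightarrow> nat \<Rightarrow> nat \<Rightarrow> int list" where
  "cpts K s a b = [int K + 1, s, s + int a - 1, s + int b - 1]"

lemma relT2_lt: "0 < T \<Longrightarrow> relT T [p,q] [p',q'] \<Longrightarrow> p < q \<Longrightarrow> p' < q'"
  unfolding relT2 eqT_def by auto
lemma relT2_le: "0 < T \<Longrightarrow> relT T [p,q] [p',q'] \<Longrightarrow> p \<le> q \<Longrightarrow> p' \<le> q'"
  unfolding relT2 eqT_def by auto

lemma r5_pick:
  assumes R: "relT T [a,b,c,d,e] [a',b',c',d',e']"
  shows "relT T [a,b,c,e] [a',b',c',e']" "relT T [a,b,e,d] [a',b',e',d']"
    "relT T [c,e] [c',e']" "relT T [e,d] [e',d']" "relT T [d,e] [d',e']"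
    "relT T [b,e] [b',e']" "relT T [e,c] [e',c']"
  using relT_sub[OF R, of "[0,1,2,4]"] relT_sub[OF R, of "[0,1,4,3]"]
    relT_sub[OF R, of "[2,4]"] relT_sub[OF R, of "[4,3]"] relT_sub[OF R, of "[3,4]"]
    relT_sub[OF R, of "[1,4]"] relT_sub[OF R, of "[4,2]"]
  by simp_all

lemma r4_pick: "relT T [a,b,c,d] [a',b',c',d'] \<Longrightarrow> relT T [a,c] [a',c']"
  using relT_sub[of T "[a,b,c,d]" "[a',b',c',d']" "[0,2]"] by simp

lemma r3_dup: "relT T [a,b,c] [a',b',c'] \<Longrightarrow> relT T [a,b,b,c] [a',b',b',c']"
  using relT_sub[of T "[a,b,c]" "[a',b',c']" "[0,1,1,2]"] by simp

lemma stt_le1: "1 \<le> K \<Longrightarrow> stt K s \<le> 1 \<Longrightarrow> s \<le> 1"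
  by (auto simp: stt_def split: if_splits)

lemma shift_ct:
  assumes K: "0 < T" "T \<le> int K" "1 \<le> K" and ab: "1 \<le> a" "a < b" "1 \<le> a'" "a' < b'"
    and sK: "s \<le> int K"
    and R: "relT T (cpts K s a b) (cpts K s' a' b')"
    and e: "lst K s0 (b - 1) = lst K s (b - 1)"
  shows "relT T (cpts K s0 a b) (cpts K s' a' b')"
proof -
  have b1: "1 \<le> b - 1" using ab by simp
  from lst_eq[OF K(3) b1 e] sK consider "s0 = s" | "s + int (b - 1) \<le> 1 \<and> s0 + int (b - 1) \<le> 1"
    by force
  then show ?thesis
  proof cases
    case 1 then show ?thesis using R by simp
  next
    case 2
    have R4: "eqT T (s - (int K + 1)) (s' - (int K + 1))"
       "eqT T (s + int a - 1 - (int K + 1)) (s' + int a' - 1 - (int K + 1))"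
       "eqT T (s + int b - 1 - (int K + 1)) (s' + int b' - 1 - (int K + 1))"
       "eqT T (s + int a - 1 - s) (s' + int a' - 1 - s')"
       "eqT T (s + int b - 1 - s) (s' + int b' - 1 - s')"
       "eqT T (s + int b - 1 - (s + int a - 1)) (s' + int b' - 1 - (s' + int a' - 1))"
      using R unfolding cpts_def relT4 by simp_all
    have l1: "s + int b - 1 - (int K + 1) \<le> -T" using 2 K ab by (simp add: of_nat_diff)
    have l2: "s' + int b' - 1 - (int K + 1) \<le> -T" using R4(3) l1 K(1) by (auto simp: eqT_def)
    have l3: "s0 + int b - 1 - (int K + 1) \<le> -T" using 2 K ab by (simp add: of_nat_diff)
    show ?thesis unfolding cpts_def relT4
      using R4(4-6) l2 l3 ab K(1) by (auto simp: eqT_def)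
  qed
qed

lemma ct_ef:
  fixes \<phi> :: "'ap hs"
  assumes K1: "1 \<le> K"
  shows "i0 \<le> 1 \<Longrightarrow> i1 \<le> 1 \<Longrightarrow> 2^height \<phi> \<le> int K \<Longrightarrow>
    relT (2^height \<phi>) (cpts K s a b) (cpts K s' a' b') \<Longrightarrow>
    stt K s = i0 \<Longrightarrow> stt K s' = i1 \<Longrightarrow> 1 \<le> a \<Longrightarrow> a < b \<Longrightarrow> 1 \<le> a' \<Longrightarrow> a' < b' \<Longrightarrow>
    sat_st (comp_tree (SK K i0)) (ctl K s a b) \<phi> \<Longrightarrow> sat_st (comp_tree (SK K i1)) (ctl K s' a' b') \<phi>"
proof (induction \<phi> arbitrary: i0 i1 s a b s' a' b')
  case (Prop p)
  have "relT 1 [int K + 1, s + int a - 1] [int K + 1, s' + int a' - 1]"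
    using r4_pick[of 1] Prop.prems(4) by (simp add: cpts_def)
  then have "int K + 1 \<le> s + int a - 1 \<Longrightarrow> int K + 1 \<le> s' + int a' - 1"
    using relT2_le[of "1::int", OF zero_less_one] by blast
  then show ?case using Prop.prems ct_prop[OF K1 refl] by metis
next
  case (Neg \<psi>)
  have "\<not> sat_st (comp_tree (SK K i1)) (ctl K s' a' b') \<psi>"
  proof
    assume "sat_st (comp_tree (SK K i1)) (ctl K s' a' b') \<psi>"
    then have "sat_st (comp_tree (SK K i0)) (ctl K s a b) \<psi>"
      using Neg.IH[of i1 i0 s' a' b' s a b] Neg.prems relT_sym by auto
    then show False using Neg.prems by simp
  qed
  then show ?case by simp
next
  case (And \<psi> \<chi>)
  have m1: "(2::int)^height \<psi> \<le> 2^height (And \<psi> \<chi>)" and m2: "(2::int)^height \<chi> \<le> 2^height (And \<psi> \<chi>)"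
    by (simp_all add: power_increasing)
  have k1: "(2::int)^height \<psi> \<le> int K" and k2: "(2::int)^height \<chi> \<le> int K"
    using m1 m2 And.prems(3) by linarith+
  have r1: "relT (2^height \<psi>) (cpts K s a b) (cpts K s' a' b')"
    by (rule relT_mono[OF And.prems(4) m1])
  have r2: "relT (2^height \<chi>) (cpts K s a b) (cpts K s' a' b')"
    by (rule relT_mono[OF And.prems(4) m2])
  show ?case using And.IH(1)[OF And.prems(1,2) k1 r1] And.IH(2)[OF And.prems(1,2) k2 r2] And.prems by auto
next
  case (Bm \<psi>)
  let ?T = "(2::int)^height \<psi>"
  have Tp: "0 < ?T" by simp
  have R2: "relT (2 * ?T) (cpts K s a b) (cpts K s' a' b')" using Bm.prems by simp
  have kk: "?T \<le> int K" using Bm.prems(3) Tp by (simp only: height.simps power_Suc)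
  from Bm.prems(11) obtain c where c: "a < c" "c < b" "sat_st (comp_tree (SK K i0)) (ctl K s a c) \<psi>"
    using ct_Bm[OF K1 refl Bm.prems(8)] by blast
  obtain y where y0: "relT ?T (cpts K s a b @ [s + int c - 1]) (cpts K s' a' b' @ [y])"
    using relT_ext[OF Tp R2, of "s + int c - 1"] by (auto simp: cpts_def)
  then have y: "relT ?T [int K + 1, s, s + int a - 1, s + int b - 1, s + int c - 1]
      [int K + 1, s', s' + int a' - 1, s' + int b' - 1, y]" by (simp add: cpts_def)
  have y1: "s' + int a' - 1 < y" using relT2_lt[OF Tp r5_pick(3)[OF y]] c by simp
  have y2: "y < s' + int b' - 1" using relT2_lt[OF Tp r5_pick(4)[OF y]] c by simp
  define c' where "c' = nat (y - s' + 1)"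
  have hy: "y = s' + int c' - 1" and c': "a' < c'" "c' < b'" using y1 y2 Bm.prems(9) unfolding c'_def by auto
  have "relT ?T (cpts K s a c) (cpts K s' a' c')"
    using r5_pick(1)[OF y] unfolding cpts_def hy .
  then have "sat_st (comp_tree (SK K i1)) (ctl K s' a' c') \<psi>"
    using Bm.IH[of i0 i1 s a c s' a' c'] Bm.prems c c' kk by simp
  then show ?case using c' ct_Bm[OF K1 refl Bm.prems(10)] by blast
next
  case (Em \<psi>)
  let ?T = "(2::int)^height \<psi>"
  have Tp: "0 < ?T" by simp
  have R2: "relT (2 * ?T) (cpts K s a b) (cpts K s' a' b')" using Em.prems by simp
  have kk: "?T \<le> int K" using Em.prems(3) Tp by (simp only: height.simps power_Suc)
  from Em.prems(11) obtain c where c: "a < c" "c < b" "sat_st (comp_tree (SK K i0)) (ctl K s c b) \<psi>"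
    using ct_Em[OF K1 refl] by blast
  obtain y where y0: "relT ?T (cpts K s a b @ [s + int c - 1]) (cpts K s' a' b' @ [y])"
    using relT_ext[OF Tp R2, of "s + int c - 1"] by (auto simp: cpts_def)
  then have y: "relT ?T [int K + 1, s, s + int a - 1, s + int b - 1, s + int c - 1]
      [int K + 1, s', s' + int a' - 1, s' + int b' - 1, y]" by (simp add: cpts_def)
  have y1: "s' + int a' - 1 < y" using relT2_lt[OF Tp r5_pick(3)[OF y]] c by simp
  have y2: "y < s' + int b' - 1" using relT2_lt[OF Tp r5_pick(4)[OF y]] c by simp
  define c' where "c' = nat (y - s' + 1)"
  have hy: "y = s' + int c' - 1" and c': "a' < c'" "c' < b'" using y1 y2 Em.prems(9) unfolding c'_def by auto
  have "relT ?T (cpts K s c b) (cpts K s' c' b')"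
    using r5_pick(2)[OF y] unfolding cpts_def hy .
  then have "sat_st (comp_tree (SK K i1)) (ctl K s' c' b') \<psi>"
    using Em.IH[of i0 i1 s c b s' c' b'] Em.prems c c' kk by simp
  then show ?case using c' ct_Em[OF K1 refl] by blast
next
  case (Bbar \<psi>)
  let ?T = "(2::int)^height \<psi>"
  have Tp: "0 < ?T" by simp
  have R2: "relT (2 * ?T) (cpts K s a b) (cpts K s' a' b')" using Bbar.prems by simp
  have kk: "?T \<le> int K" using Bbar.prems(3) Tp by (simp only: height.simps power_Suc)
  have k2: "2 * ?T \<le> int K" using Bbar.prems(3) by simp
  have sK: "s \<le> int K" using stt_le1[OF K1, of s] Bbar.prems(1,5) K1 by simp
  from Bbar.prems(11) obtain s0 d where d: "stt K s0 = i0" "lst K s0 (b - 1) = lst K s (b - 1)" "b < d"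
      "sat_st (comp_tree (SK K i0)) (ctl K s0 a d) \<psi>"
    using ct_Bbar[OF K1 refl Bbar.prems(7,8)] by blast
  have R0: "relT (2 * ?T) (cpts K s0 a b) (cpts K s' a' b')"
    using shift_ct[OF _ k2 K1 Bbar.prems(7-10) sK R2 d(2)] Tp by simp
  obtain y where y0: "relT ?T (cpts K s0 a b @ [s0 + int d - 1]) (cpts K s' a' b' @ [y])"
    using relT_ext[OF Tp R0, of "s0 + int d - 1"] by (auto simp: cpts_def)
  then have y: "relT ?T [int K + 1, s0, s0 + int a - 1, s0 + int b - 1, s0 + int d - 1]
      [int K + 1, s', s' + int a' - 1, s' + int b' - 1, y]" by (simp add: cpts_def)
  have y1: "s' + int b' - 1 < y" using relT2_lt[OF Tp r5_pick(5)[OF y]] d by simp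
  define d' where "d' = nat (y - s' + 1)"
  have hy: "y = s' + int d' - 1" and d': "b' < d'" using y1 Bbar.prems(9,10) unfolding d'_def by auto
  have "relT ?T (cpts K s0 a d) (cpts K s' a' d')"
    using r5_pick(1)[OF y] unfolding cpts_def hy .
  then have "sat_st (comp_tree (SK K i1)) (ctl K s' a' d') \<psi>"
    using Bbar.IH[of i0 i1 s0 a d s' a' d'] Bbar.prems d d' kk by simp
  then show ?case using d' Bbar.prems(6) ct_Bbar[OF K1 refl Bbar.prems(9,10)] by blast
next
  case (Ebar \<psi>)
  let ?T = "(2::int)^height \<psi>"
  have Tp: "0 < ?T" by simp
  have R2: "relT (2 * ?T) (cpts K s a b) (cpts K s' a' b')" using Ebar.prems by simp
  have kk: "?T \<le> int K" using Ebar.prems(3) Tp by (simp only: height.simps power_Suc)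
  have k2: "2 * ?T \<le> int K" using Ebar.prems(3) by simp
  have sK: "s \<le> int K" using stt_le1[OF K1, of s] Ebar.prems(1,5) K1 by simp
  from Ebar.prems(11) obtain s0 v where d: "stt K s0 = i0" "lst K s0 (b - 1) = lst K s (b - 1)"
      "1 \<le> v" "v < a" "sat_st (comp_tree (SK K i0)) (ctl K s0 v b) \<psi>"
    using ct_Ebar[OF K1 refl Ebar.prems(7,8)] by blast
  have R0: "relT (2 * ?T) (cpts K s0 a b) (cpts K s' a' b')"
    using shift_ct[OF _ k2 K1 Ebar.prems(7-10) sK R2 d(2)] Tp by simp
  obtain y where y0: "relT ?T (cpts K s0 a b @ [s0 + int v - 1]) (cpts K s' a' b' @ [y])"
    using relT_ext[OF Tp R0, of "s0 + int v - 1"] by (auto simp: cpts_def)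
  then have y: "relT ?T [int K + 1, s0, s0 + int a - 1, s0 + int b - 1, s0 + int v - 1]
      [int K + 1, s', s' + int a' - 1, s' + int b' - 1, y]" by (simp add: cpts_def)
  have y1: "s' \<le> y" using relT2_le[OF Tp r5_pick(6)[OF y]] d by simp
  have y2: "y < s' + int a' - 1" using relT2_lt[OF Tp r5_pick(7)[OF y]] d by simp
  define v' where "v' = nat (y - s' + 1)"
  have hy: "y = s' + int v' - 1" and v': "1 \<le> v'" "v' < a'" using y1 y2 unfolding v'_def by auto
  have "relT ?T (cpts K s0 v b) (cpts K s' v' b')"
    using r5_pick(2)[OF y] unfolding cpts_def hy .
  then have "sat_st (comp_tree (SK K i1)) (ctl K s' v' b') \<psi>"
    using Ebar.IH[of i0 i1 s0 v b s' v' b'] Ebar.prems d v' kk by simp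
  then show ?case using v' Ebar.prems(6) ct_Ebar[OF K1 refl Ebar.prems(9,10)] by blast
qed



lemma ct_init_SK:
  assumes K: "1 \<le> K"
  shows "is_init_trace (comp_tree (SK K ini :: (nat,'ap) kripke)) \<rho> \<longleftrightarrow>
    (\<exists>s b. stt K s = ini \<and> 1 < b \<and> \<rho> = ctl K s 1 b)"
proof
  assume "is_init_trace (comp_tree (SK K ini :: (nat,'ap) kripke)) \<rho>"
  then have t: "is_trace (comp_tree (SK K ini :: (nat,'ap) kripke)) \<rho>" and h: "hd \<rho> = [ini]"
    unfolding is_init_trace_def by (auto simp: comp_tree_def)
  from t obtain s a b where r: "stt K s = ini" "1 \<le> a" "a < b" "\<rho> = ctl K s a b"
    unfolding ct_trace_SK[OF K] by blast
  have "hd \<rho> = lst K s a" using r by (simp add: ctl_def upt_conv_Cons)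
  then have "lst K s a = [ini]" using h by simp
  then have "length (lst K s a) = length [ini]" by (rule arg_cong)
  then have "a = 1" by simp
  then show "\<exists>s b. stt K s = ini \<and> 1 < b \<and> \<rho> = ctl K s 1 b" using r by auto
next
  assume "\<exists>s b. stt K s = ini \<and> 1 < b \<and> \<rho> = ctl K s 1 b"
  then obtain s b where r: "stt K s = ini" "1 < b" "\<rho> = ctl K s 1 b" by blast
  have "is_trace (comp_tree (SK K ini :: (nat,'ap) kripke)) \<rho>"
    unfolding ct_trace_SK[OF K] using r by (intro exI[of _ s] exI[of _ 1] exI[of _ b]) auto
  moreover have "hd \<rho> = [ini]" using r by (simp add: ctl_def upt_conv_Cons lst_def)
  ultimately show "is_init_trace (comp_tree (SK K ini :: (nat,'ap) kripke)) \<rho>"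
    unfolding is_init_trace_def by (simp add: comp_tree_def)
qed

lemma ct_models_eq:
  fixes \<phi> :: "'ap hs"
  assumes K: "K = 2^Suc (height \<phi>)"
  shows "models_ct (SK K 1 :: (nat,'ap) kripke) \<phi> \<longleftrightarrow> models_ct (SK K 0 :: (nat,'ap) kripke) \<phi>"
proof -
  let ?T = "(2::int)^height \<phi>"
  have Tp: "0 < ?T" by simp
  have KT: "int K = 2 * ?T" using K by simp
  have K1: "1 \<le> K" using K by simp
  have KT1: "?T \<le> int K" "2 * ?T \<le> int K" using KT Tp by auto
  have eq1: "\<And>n. cpts K 1 1 (Suc n) = [int K + 1, 1, 1, 1 + int n]" by (simp add: cpts_def)
  have eq2: "\<And>s b. 1 \<le> b \<Longrightarrow> cpts K s 1 b = [int K + 1, s, s, s + int (b - 1)]"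
    by (simp add: cpts_def of_nat_diff)
  show ?thesis
  proof
    assume A: "models_ct (SK K 1 :: (nat,'ap) kripke) \<phi>"
    show "models_ct (SK K 0 :: (nat,'ap) kripke) \<phi>" unfolding models_ct_def models_st_def
    proof (intro allI impI)
      fix \<rho> assume "is_init_trace (comp_tree (SK K 0 :: (nat,'ap) kripke)) \<rho>"
      then obtain s' b' where sb: "stt K s' = 0" "1 < b'" "\<rho> = ctl K s' 1 b'"
        using ct_init_SK[OF K1] by blast
      then have s0: "s' \<le> 0" by (simp add: stt_eq0)
      have b1: "1 \<le> b' - 1" using sb by simp
      obtain n where n: "1 \<le> n" "relT ?T [int K + 1, 1, 1 + int n] [int K + 1, s', s' + int (b' - 1)]"
        using cover_B[OF Tp KT1(2) b1 s0] by blast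
      have e2: "cpts K s' 1 b' = [int K + 1, s', s', s' + int (b' - 1)]" using sb by (intro eq2) simp
      have R: "relT ?T (cpts K 1 1 (Suc n)) (cpts K s' 1 b')"
        unfolding eq1 e2 by (rule r3_dup[OF n(2)])
      have "is_init_trace (comp_tree (SK K 1 :: (nat,'ap) kripke)) (ctl K 1 1 (Suc n))"
        unfolding ct_init_SK[OF K1] using n(1) K1 by (intro exI[of _ 1] exI[of _ "Suc n"]) (simp add: stt_def)
      then have "sat_st (comp_tree (SK K 1 :: (nat,'ap) kripke)) (ctl K 1 1 (Suc n)) \<phi>"
        using A by (simp add: models_ct_def models_st_def)
      then show "sat_st (comp_tree (SK K 0 :: (nat,'ap) kripke)) \<rho> \<phi>"
        using ct_ef[OF K1, of 1 0 \<phi> 1 1 "Suc n" s' 1 b'] R KT1 sb n(1) K1 by (simp add: stt_def)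
    qed
  next
    assume A: "models_ct (SK K 0 :: (nat,'ap) kripke) \<phi>"
    show "models_ct (SK K 1 :: (nat,'ap) kripke) \<phi>" unfolding models_ct_def models_st_def
    proof (intro allI impI)
      fix \<rho> assume "is_init_trace (comp_tree (SK K 1 :: (nat,'ap) kripke)) \<rho>"
      then obtain s b where sb: "stt K s = 1" "1 < b" "\<rho> = ctl K s 1 b"
        using ct_init_SK[OF K1] by blast
      then have s1: "s = 1" using stt_eq1[OF K1, of s] by simp
      have b1: "1 \<le> b - 1" using sb by simp
      obtain s' n' where n: "s' \<le> 0" "1 \<le> n'" "relT ?T [int K + 1, 1, 1 + int (b - 1)] [int K + 1, s', s' + int n']"
        using cover_A[OF Tp KT1(2) b1] by blast
      have e1: "cpts K 1 1 b = [int K + 1, 1, 1, 1 + int (b - 1)]" using sb by (intro eq2) simp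
      have e2: "cpts K s' 1 (Suc n') = [int K + 1, s', s', s' + int n']" by (simp add: cpts_def)
      have R: "relT ?T (cpts K 1 1 b) (cpts K s' 1 (Suc n'))"
        unfolding e1 e2 by (rule r3_dup[OF n(3)])
      have "is_init_trace (comp_tree (SK K 0 :: (nat,'ap) kripke)) (ctl K s' 1 (Suc n'))"
        unfolding ct_init_SK[OF K1] using n by (intro exI[of _ s'] exI[of _ "Suc n'"]) (simp add: stt_eq0)
      then have "sat_st (comp_tree (SK K 0 :: (nat,'ap) kripke)) (ctl K s' 1 (Suc n')) \<phi>"
        using A by (simp add: models_ct_def models_st_def)
      then have "sat_st (comp_tree (SK K 1 :: (nat,'ap) kripke)) (ctl K 1 1 b) \<phi>"
        using ct_ef[OF K1, of 0 1 \<phi> s' 1 "Suc n'" 1 1 b] relT_sym[OF R] KT1 sb n K1 by (simp add: stt_def stt_eq0)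
      then show "sat_st (comp_tree (SK K 1 :: (nat,'ap) kripke)) \<rho> \<phi>" using sb s1 by simp
    qed
  qed
qed

lemma B_ct: "\<not> expr_geq (models_ct :: ('ap::finite) semantics) models_lin"
proof
  assume "expr_geq (models_ct :: ('ap::finite) semantics) models_lin"
  then obtain \<phi> :: "'ap hs" where eq: "expr_equiv models_ct \<phi> models_lin (psiF undefined)"
    unfolding expr_geq_def by blast
  define K where "K = (2::nat)^Suc (height \<phi>)"
  have K1: "1 \<le> K" unfolding K_def by simp
  have f1: "finite_kripke (SK K 1 :: (nat,'ap) kripke)" and f0: "finite_kripke (SK K 0 :: (nat,'ap) kripke)"
    by (simp_all add: finite_SK)
  have "models_ct (SK K 1 :: (nat,'ap) kripke) \<phi>"
    using eq[unfolded expr_equiv_def, rule_format, OF f1] lin_SK1[OF K1] by simp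
  moreover have "\<not> models_ct (SK K 0 :: (nat,'ap) kripke) \<phi>"
    using eq[unfolded expr_equiv_def, rule_format, OF f0] lin_SK0 by simp
  ultimately show False using ct_models_eq[OF K_def] by blast
qed



lemma lin_cong: "(\<And>t. Lab K (\<pi> t) = Lab K' (\<pi>' t)) \<Longrightarrow> sat_lin K \<pi> x y \<psi> \<longleftrightarrow> sat_lin K' \<pi>' x y \<psi>"
  by (induction \<psi> arbitrary: x y) auto

lemma models_lin_eq:
  assumes "\<And>\<pi>. is_inf_path K \<pi> \<Longrightarrow> \<pi> 0 = Init K \<Longrightarrow>
      \<exists>\<pi>'. is_inf_path K' \<pi>' \<and> \<pi>' 0 = Init K' \<and> (\<forall>t. Lab K (\<pi> t) = Lab K' (\<pi>' t))"
    and "\<And>\<pi>. is_inf_path K' \<pi> \<Longrightarrow> \<pi> 0 = Init K' \<Longrightarrow>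
      \<exists>\<pi>'. is_inf_path K \<pi>' \<and> \<pi>' 0 = Init K \<and> (\<forall>t. Lab K' (\<pi> t) = Lab K (\<pi>' t))"
  shows "models_lin K \<psi> \<longleftrightarrow> models_lin K' \<psi>"
  unfolding models_lin_def
proof (intro iffI allI impI)
  fix \<pi> i assume A: "\<forall>\<pi>. is_inf_path K \<pi> \<and> \<pi> 0 = Init K \<longrightarrow> (\<forall>i. sat_lin K \<pi> 0 i \<psi>)"
    and p: "is_inf_path K' \<pi> \<and> \<pi> 0 = Init K'"
  obtain \<pi>' where "is_inf_path K \<pi>'" "\<pi>' 0 = Init K" "\<forall>t. Lab K' (\<pi> t) = Lab K (\<pi>' t)"
    using assms(2) p by blast
  then show "sat_lin K' \<pi> 0 i \<psi>" using A lin_cong[of K' \<pi> K \<pi>'] by blast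
next
  fix \<pi> i assume A: "\<forall>\<pi>. is_inf_path K' \<pi> \<and> \<pi> 0 = Init K' \<longrightarrow> (\<forall>i. sat_lin K' \<pi> 0 i \<psi>)"
    and p: "is_inf_path K \<pi> \<and> \<pi> 0 = Init K"
  obtain \<pi>' where "is_inf_path K' \<pi>'" "\<pi>' 0 = Init K'" "\<forall>t. Lab K (\<pi> t) = Lab K' (\<pi>' t)"
    using assms(1) p by blast
  then show "sat_lin K \<pi> 0 i \<psi>" using A lin_cong[of K \<pi> K' \<pi>'] by blast
qed

lemma sat_top[simp]: "sat_st K \<rho> (tt a)" by (auto simp: tt_def)

definition KA1 :: "(nat, 'ap) kripke" where
  "KA1 = \<lparr>St = {0}, Tr = {(0,0)}, Lab = (\<lambda>_. {}), Init = 0\<rparr>"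
definition KA2 :: "(nat, 'ap) kripke" where
  "KA2 = \<lparr>St = {0,1}, Tr = {(0,1),(1,1)}, Lab = (\<lambda>_. {}), Init = 0\<rparr>"

lemma KA_lin: "models_lin (KA1 :: (nat,'ap) kripke) \<psi> \<longleftrightarrow> models_lin (KA2 :: (nat,'ap) kripke) \<psi>"
proof (rule models_lin_eq)
  fix \<pi> assume "is_inf_path (KA1 :: (nat,'ap) kripke) \<pi>" "\<pi> 0 = Init (KA1 :: (nat,'ap) kripke)"
  show "\<exists>\<pi>'. is_inf_path (KA2 :: (nat,'ap) kripke) \<pi>' \<and> \<pi>' 0 = Init (KA2 :: (nat,'ap) kripke) \<and>
     (\<forall>t. Lab (KA1 :: (nat,'ap) kripke) (\<pi> t) = Lab (KA2 :: (nat,'ap) kripke) (\<pi>' t))"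
    by (intro exI[of _ "\<lambda>t. if t = 0 then 0 else 1"]) (simp add: KA1_def KA2_def is_inf_path_def)
next
  fix \<pi> assume "is_inf_path (KA2 :: (nat,'ap) kripke) \<pi>" "\<pi> 0 = Init (KA2 :: (nat,'ap) kripke)"
  show "\<exists>\<pi>'. is_inf_path (KA1 :: (nat,'ap) kripke) \<pi>' \<and> \<pi>' 0 = Init (KA1 :: (nat,'ap) kripke) \<and>
     (\<forall>t. Lab (KA2 :: (nat,'ap) kripke) (\<pi> t) = Lab (KA1 :: (nat,'ap) kripke) (\<pi>' t))"
    by (intro exI[of _ "\<lambda>t. 0"]) (simp add: KA1_def KA2_def is_inf_path_def)
qed

lemma KA1_st: "models_st (KA1 :: (nat,'ap) kripke) (Ebar (tt a))"
  unfolding models_st_def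
proof (intro allI impI)
  fix \<rho> assume "is_init_trace (KA1 :: (nat,'ap) kripke) \<rho>"
  then obtain \<pi> where ne: "\<rho> \<noteq> []" and p: "is_inf_path (KA1 :: (nat,'ap) kripke) \<pi>"
    and r: "\<rho> = map \<pi> [0..<length \<rho>]" unfolding is_init_trace_def is_trace_def by blast
  have "\<And>t. \<pi> t = 0" using p by (simp add: is_inf_path_def KA1_def)
  then have pz: "\<pi> = (\<lambda>_. 0)" by (simp add: fun_eq_iff)
  have r0: "\<rho> = map (\<lambda>_. 0) [0..<length \<rho>]" using r unfolding pz .
  have "is_inf_path (KA1 :: (nat,'ap) kripke) (\<lambda>_. 0)" by (simp add: is_inf_path_def KA1_def)
  then have "is_trace (KA1 :: (nat,'ap) kripke) (0 # \<rho>)"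
    unfolding is_trace_def by (intro conjI exI[of _ "\<lambda>_. 0"]) (simp_all, subst r0, simp add: map_replicate_trivial replicate_append_same)
  moreover have "\<rho> \<in> Suff (0 # \<rho>)" unfolding Suff_def using ne
    by (intro CollectI exI[of _ 1]) auto
  ultimately show "sat_st (KA1 :: (nat,'ap) kripke) \<rho> (Ebar (tt a))" by auto
qed

lemma KA2_st: "\<not> models_st (KA2 :: (nat,'ap) kripke) (Ebar (tt a))"
proof -
  have p: "is_inf_path (KA2 :: (nat,'ap) kripke) (\<lambda>t. if t = 0 then 0 else 1)"
    by (simp add: is_inf_path_def KA2_def)
  have "is_init_trace (KA2 :: (nat,'ap) kripke) [0]"
    unfolding is_init_trace_def is_trace_def using p by (auto simp: KA2_def intro!: exI[of _ "\<lambda>t. if t = 0 then 0 else 1"])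
  moreover have "\<not> sat_st (KA2 :: (nat,'ap) kripke) [0] (Ebar (tt a))"
  proof
    assume "sat_st (KA2 :: (nat,'ap) kripke) [0] (Ebar (tt a))"
    then obtain \<rho>' where t: "is_trace (KA2 :: (nat,'ap) kripke) \<rho>'" and s: "[0] \<in> Suff \<rho>'" by auto
    from t obtain \<pi> where p: "is_inf_path (KA2 :: (nat,'ap) kripke) \<pi>" and r: "\<rho>' = map \<pi> [0..<length \<rho>']"
      unfolding is_trace_def by blast
    from s obtain i where i: "1 \<le> i" "i < length \<rho>'" "drop i \<rho>' = [0]" unfolding Suff_def by auto
    have "\<rho>' ! i = 0" using i by (metis Cons_nth_drop_Suc list.inject)
    then have "\<pi> i = 0" using i r by (metis nth_map_upt add_0 diff_zero)
    moreover have "(\<pi> (i - 1), \<pi> i) \<in> Tr (KA2 :: (nat,'ap) kripke)"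
      using p i unfolding is_inf_path_def by (metis Suc_diff_1 less_le_trans zero_less_one)
    ultimately show False by (simp add: KA2_def)
  qed
  ultimately show ?thesis unfolding models_st_def by blast
qed

lemma finite_KA: "finite_kripke KA1" "finite_kripke KA2"
  by (auto simp: finite_kripke_def wf_kripke_def KA1_def KA2_def)

lemma A_st: "\<not> expr_geq (models_lin :: ('ap::finite) semantics) models_st"
proof
  assume "expr_geq (models_lin :: ('ap::finite) semantics) models_st"
  then obtain \<psi> :: "'ap hs" where eq: "expr_equiv models_lin \<psi> models_st (Ebar (tt undefined))"
    unfolding expr_geq_def by blast
  have "models_lin (KA1 :: (nat,'ap) kripke) \<psi>"
    using eq[unfolded expr_equiv_def, rule_format, OF finite_KA(1)] KA1_st by simp
  moreover have "\<not> models_lin (KA2 :: (nat,'ap) kripke) \<psi>"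
    using eq[unfolded expr_equiv_def, rule_format, OF finite_KA(2)] KA2_st by simp
  ultimately show False using KA_lin by blast
qed



definition ge2 :: "'ap \<Rightarrow> 'ap hs" where "ge2 a = Bm (tt a)"
definition ge3 :: "'ap \<Rightarrow> 'ap hs" where "ge3 a = Bm (ge2 a)"
definition ge4 :: "'ap \<Rightarrow> 'ap hs" where "ge4 a = Bm (ge3 a)"
definition lastN :: "'ap \<Rightarrow> 'ap hs" where "lastN a = Em (And (Neg (ge2 a)) (Neg (Prop a)))"
definition phiC :: "'ap \<Rightarrow> 'ap hs" where
  "phiC a = Neg (And (And (ge2 a) (Neg (ge3 a)))
      (Neg (Bbar (And (And (ge3 a) (Neg (ge4 a))) (lastN a)))))"

lemma sat_ge2: "sat_st K \<rho> (ge2 a) \<longleftrightarrow> 2 \<le> length \<rho>"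
  by (auto simp: ge2_def Pref_def)

lemma sat_ge3: "sat_st K \<rho> (ge3 a) \<longleftrightarrow> 3 \<le> length \<rho>"
proof -
  have "sat_st K \<rho> (ge3 a) \<longleftrightarrow> (\<exists>i. 1 \<le> i \<and> i < length \<rho> \<and> 2 \<le> min i (length \<rho>))"
    by (auto simp: ge3_def Pref_def sat_ge2)
  also have "\<dots> \<longleftrightarrow> 3 \<le> length \<rho>" by (auto intro: exI[of _ 2])
  finally show ?thesis .
qed

lemma sat_ge4: "sat_st K \<rho> (ge4 a) \<longleftrightarrow> 4 \<le> length \<rho>"
proof -
  have "sat_st K \<rho> (ge4 a) \<longleftrightarrow> (\<exists>i. 1 \<le> i \<and> i < length \<rho> \<and> 3 \<le> min i (length \<rho>))"
    by (auto simp: ge4_def Pref_def sat_ge3)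
  also have "\<dots> \<longleftrightarrow> 4 \<le> length \<rho>" by (auto intro: exI[of _ 3])
  finally show ?thesis .
qed

lemma drop_last: "xs \<noteq> [] \<Longrightarrow> drop (length xs - 1) xs = [last xs]"
  by (cases xs rule: rev_cases) auto

lemma sat_lastN: "sat_st K \<rho> (lastN a) \<longleftrightarrow> 2 \<le> length \<rho> \<and> a \<notin> Lab K (last \<rho>)"
proof
  assume "sat_st K \<rho> (lastN a)"
  then obtain i where i: "1 \<le> i" "i < length \<rho>" "length (drop i \<rho>) < 2"
    "\<not> (\<forall>x\<in>set (drop i \<rho>). a \<in> Lab K x)"
    unfolding lastN_def sat_st.simps Suff_def sat_ge2 by force
  then have "i = length \<rho> - 1" by auto
  moreover have ne: "\<rho> \<noteq> []" using i by auto
  ultimately have "drop i \<rho> = [last \<rho>]" using drop_last[OF ne] by simp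
  then show "2 \<le> length \<rho> \<and> a \<notin> Lab K (last \<rho>)" using i by auto
next
  assume a: "2 \<le> length \<rho> \<and> a \<notin> Lab K (last \<rho>)"
  then have ne: "\<rho> \<noteq> []" by auto
  have d: "drop (length \<rho> - 1) \<rho> = [last \<rho>]" using drop_last[OF ne] .
  show "sat_st K \<rho> (lastN a)" unfolding lastN_def sat_st.simps Suff_def
    using a d by (intro bexI[of _ "drop (length \<rho> - 1) \<rho>"] CollectI exI[of _ "length \<rho> - 1"]) (auto simp: sat_ge2)
qed



lemma sat_phiC: "sat_st K \<rho> (phiC a) \<longleftrightarrow>
  (length \<rho> = 2 \<longrightarrow> (\<exists>\<rho>'. is_trace K \<rho>' \<and> \<rho> \<in> Pref \<rho>' \<and> length \<rho>' = 3 \<and> a \<notin> Lab K (last \<rho>')))"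
proof -
  have "sat_st K \<rho> (phiC a) \<longleftrightarrow> \<not> ((2 \<le> length \<rho> \<and> \<not> 3 \<le> length \<rho>) \<and>
     \<not> (\<exists>\<rho>'. is_trace K \<rho>' \<and> \<rho> \<in> Pref \<rho>' \<and> ((3 \<le> length \<rho>' \<and> \<not> 4 \<le> length \<rho>') \<and>
        (2 \<le> length \<rho>' \<and> a \<notin> Lab K (last \<rho>')))))"
    unfolding phiC_def sat_st.simps sat_ge2 sat_ge3 sat_ge4 sat_lastN by blast
  also have "\<dots> \<longleftrightarrow> (length \<rho> = 2 \<longrightarrow> (\<exists>\<rho>'. is_trace K \<rho>' \<and> \<rho> \<in> Pref \<rho>' \<and> length \<rho>' = 3 \<and> a \<notin> Lab K (last \<rho>')))"
  proof -
    have "\<And>\<rho>'. ((3 \<le> length \<rho>' \<and> \<not> 4 \<le> length \<rho>') \<and> (2 \<le> length \<rho>' \<and> a \<notin> Lab K (last \<rho>')))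
       \<longleftrightarrow> (length \<rho>' = 3 \<and> a \<notin> Lab K (last \<rho>'))" by auto
    moreover have "(2 \<le> length \<rho> \<and> \<not> 3 \<le> length \<rho>) \<longleftrightarrow> length \<rho> = 2" by auto
    ultimately show ?thesis by (simp add: conj_ac)
  qed
  finally show ?thesis .
qed

definition KC3 :: "(nat, 'ap) kripke" where
  "KC3 = \<lparr>St = {0,1,2,3}, Tr = {(0,1),(1,2),(1,3),(2,2),(3,3)},
          Lab = (\<lambda>s. if s = 2 then UNIV else {}), Init = 0\<rparr>"
definition KC4 :: "(nat, 'ap) kripke" where
  "KC4 = \<lparr>St = {0,1,2,3,4}, Tr = {(0,1),(0,4),(1,2),(4,3),(2,2),(3,3)},
          Lab = (\<lambda>s. if s = 2 then UNIV else {}), Init = 0\<rparr>"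

lemma finite_KC: "finite_kripke KC3" "finite_kripke KC4"
  by (auto simp: finite_kripke_def wf_kripke_def KC3_def KC4_def)

lemma KC3_path:
  assumes p: "is_inf_path (KC3 :: (nat,'ap) kripke) \<pi>" and p0: "\<pi> 0 = 0"
  shows "\<pi> 1 = 1" "\<pi> 2 = 2 \<or> \<pi> 2 = 3" "\<And>t. \<pi> (t + 2) = \<pi> 2"
proof -
  have tr: "\<And>t. (\<pi> t, \<pi> (Suc t)) \<in> {(0,1),(1,2),(1,3),(2,2),(3,3)}"
    using p by (simp add: is_inf_path_def KC3_def)
  show 1: "\<pi> 1 = 1" using tr[of 0] p0 by auto
  show 2: "\<pi> 2 = 2 \<or> \<pi> 2 = 3" using tr[of 1] 1 by (auto simp: numeral_2_eq_2)
  fix t show "\<pi> (t + 2) = \<pi> 2"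
  proof (induction t)
    case (Suc t)
    then show ?case using tr[of "t + 2"] 2 by auto
  qed (simp add: numeral_2_eq_2)
qed

lemma KC4_path:
  assumes p: "is_inf_path (KC4 :: (nat,'ap) kripke) \<pi>" and p0: "\<pi> 0 = 0"
  shows "\<pi> 1 = 1 \<or> \<pi> 1 = 4" "\<pi> 2 = (if \<pi> 1 = 1 then 2 else 3)" "\<And>t. \<pi> (t + 2) = \<pi> 2"
proof -
  have tr: "\<And>t. (\<pi> t, \<pi> (Suc t)) \<in> {(0,1),(0,4),(1,2),(4,3),(2,2),(3,3)}"
    using p by (simp add: is_inf_path_def KC4_def)
  show 1: "\<pi> 1 = 1 \<or> \<pi> 1 = 4" using tr[of 0] p0 by auto
  show 2: "\<pi> 2 = (if \<pi> 1 = 1 then 2 else 3)" using tr[of 1] 1 by (auto simp: numeral_2_eq_2)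
  fix t show "\<pi> (t + 2) = \<pi> 2"
  proof (induction t)
    case (Suc t)
    then show ?case using tr[of "t + 2"] 2 by (auto split: if_splits)
  qed (simp add: numeral_2_eq_2)
qed

lemma nat_cases2: "(t::nat) = 0 \<or> t = 1 \<or> (\<exists>u. t = u + 2)"
  by presburger

lemma KC_lin: "models_lin (KC3 :: (nat,'ap) kripke) \<psi> \<longleftrightarrow> models_lin (KC4 :: (nat,'ap) kripke) \<psi>"
proof (rule models_lin_eq)
  fix \<pi> assume p: "is_inf_path (KC3 :: (nat,'ap) kripke) \<pi>" and p0: "\<pi> 0 = Init (KC3 :: (nat,'ap) kripke)"
  then have q0: "\<pi> 0 = 0" by (simp add: KC3_def)
  note P = KC3_path[OF p q0]
  define \<pi>' where "\<pi>' = (\<lambda>t::nat. if t = 0 then 0 else if t = 1 then (if \<pi> 2 = 2 then 1 else 4) else \<pi> 2)"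
  have "is_inf_path (KC4 :: (nat,'ap) kripke) \<pi>'"
    unfolding is_inf_path_def
  proof
    fix t show "(\<pi>' t, \<pi>' (Suc t)) \<in> Tr (KC4 :: (nat,'ap) kripke)"
      using nat_cases2[of t] P(2) by (auto simp: \<pi>'_def KC4_def)
  qed
  moreover have "\<forall>t. Lab (KC3 :: (nat,'ap) kripke) (\<pi> t) = Lab (KC4 :: (nat,'ap) kripke) (\<pi>' t)"
  proof
    fix t show "Lab (KC3 :: (nat,'ap) kripke) (\<pi> t) = Lab (KC4 :: (nat,'ap) kripke) (\<pi>' t)"
      using nat_cases2[of t] P q0 by (auto simp: \<pi>'_def KC3_def KC4_def)
  qed
  ultimately show "\<exists>\<pi>'. is_inf_path (KC4 :: (nat,'ap) kripke) \<pi>' \<and> \<pi>' 0 = Init (KC4 :: (nat,'ap) kripke) \<and>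
     (\<forall>t. Lab (KC3 :: (nat,'ap) kripke) (\<pi> t) = Lab (KC4 :: (nat,'ap) kripke) (\<pi>' t))"
    by (intro exI[of _ \<pi>']) (auto simp: \<pi>'_def KC4_def)
next
  fix \<pi> assume p: "is_inf_path (KC4 :: (nat,'ap) kripke) \<pi>" and p0: "\<pi> 0 = Init (KC4 :: (nat,'ap) kripke)"
  then have q0: "\<pi> 0 = 0" by (simp add: KC4_def)
  note P = KC4_path[OF p q0]
  define \<pi>' where "\<pi>' = (\<lambda>t::nat. if t = 0 then 0 else if t = 1 then 1 else \<pi> 2)"
  have "is_inf_path (KC3 :: (nat,'ap) kripke) \<pi>'"
    unfolding is_inf_path_def
  proof
    fix t show "(\<pi>' t, \<pi>' (Suc t)) \<in> Tr (KC3 :: (nat,'ap) kripke)"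
      using nat_cases2[of t] P(2) by (auto simp: \<pi>'_def KC3_def)
  qed
  moreover have "\<forall>t. Lab (KC4 :: (nat,'ap) kripke) (\<pi> t) = Lab (KC3 :: (nat,'ap) kripke) (\<pi>' t)"
  proof
    fix t show "Lab (KC4 :: (nat,'ap) kripke) (\<pi> t) = Lab (KC3 :: (nat,'ap) kripke) (\<pi>' t)"
      using nat_cases2[of t] P q0 by (auto simp: \<pi>'_def KC3_def KC4_def)
  qed
  ultimately show "\<exists>\<pi>'. is_inf_path (KC3 :: (nat,'ap) kripke) \<pi>' \<and> \<pi>' 0 = Init (KC3 :: (nat,'ap) kripke) \<and>
     (\<forall>t. Lab (KC4 :: (nat,'ap) kripke) (\<pi> t) = Lab (KC3 :: (nat,'ap) kripke) (\<pi>' t))"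
    by (intro exI[of _ \<pi>']) (auto simp: \<pi>'_def KC3_def)
qed



lemma init_trace_map:
  assumes "is_inf_path K \<sigma>" "\<sigma> 0 = Init K" "1 \<le> m"
  shows "is_init_trace K (map \<sigma> [0..<m])"
  using assms unfolding is_init_trace_def is_trace_def
  by (auto simp: hd_map intro!: exI[of _ \<sigma>])

lemma init_trace_nth:
  assumes "is_init_trace K h"
  obtains \<sigma> where "is_inf_path K \<sigma>" "\<sigma> 0 = Init K" "\<And>i. i < length h \<Longrightarrow> h ! i = \<sigma> i"
proof -
  from assms obtain \<sigma> where ne: "h \<noteq> []" and p: "is_inf_path K \<sigma>" and hs: "h = map \<sigma> [0..<length h]"
    and hd: "hd h = Init K" unfolding is_init_trace_def is_trace_def by blast
  have "\<And>i. i < length h \<Longrightarrow> h ! i = \<sigma> i" by (subst hs) simp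
  moreover have "\<sigma> 0 = Init K" using hd ne calculation[of 0] by (simp add: hd_conv_nth)
  ultimately show ?thesis using that p by blast
qed

lemma ct_init_decomp:
  assumes "is_init_trace (comp_tree K) \<rho>"
  obtains h where "is_init_trace K h" "\<rho> = map (\<lambda>j. take j h) [1..<Suc (length h)]"
proof -
  from assms have t: "is_trace (comp_tree K) \<rho>" and hd: "hd \<rho> = [Init K]"
    unfolding is_init_trace_def by (auto simp: comp_tree_def)
  from t obtain h k where h: "is_init_trace K h" "1 \<le> k" "k \<le> length h"
    "\<rho> = map (\<lambda>j. take j h) [k..<Suc (length h)]" unfolding ct_trace by blast
  have "hd \<rho> = take k h" using h by (simp del: upt_Suc add: upt_conv_Cons)
  then have E: "take k h = [Init K]" using hd by simp
  have "length (take k h) = length [Init K]" using arg_cong[where f=length, OF E] .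
  then have "k = 1" using h by simp
  then show ?thesis using that h by blast
qed

lemma KC3_ct: "models_ct (KC3 :: (nat,'ap) kripke) (phiC a)"
  unfolding models_ct_def models_st_def
proof (intro allI impI)
  fix \<rho> assume "is_init_trace (comp_tree (KC3 :: (nat,'ap) kripke)) \<rho>"
  then obtain h where ih: "is_init_trace (KC3 :: (nat,'ap) kripke) h"
    and r: "\<rho> = map (\<lambda>j. take j h) [1..<Suc (length h)]" by (rule ct_init_decomp)
  obtain \<sigma> where sp: "is_inf_path (KC3 :: (nat,'ap) kripke) \<sigma>" "\<sigma> 0 = 0"
    and hs: "\<And>i. i < length h \<Longrightarrow> h ! i = \<sigma> i"
    using init_trace_nth[OF ih] by (auto simp: KC3_def)
  show "sat_st (comp_tree (KC3 :: (nat,'ap) kripke)) \<rho> (phiC a)"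
    unfolding sat_phiC
  proof
    assume "length \<rho> = 2"
    then have lh: "length h = 2" using r by (simp del: upt_Suc)
    have "\<sigma> 1 = 1" using KC3_path(1)[OF sp] .
    then have h01: "h = [0, 1]" using lh hs[of 0] hs[of 1] sp(2)
      by (intro nth_equalityI) (auto simp: less_2_cases_iff)
    have rr: "\<rho> = [[0], [0,1]]" using r h01 by (simp add: upt_rec)
    define \<sigma>' where "\<sigma>' = (\<lambda>t::nat. if t = 0 then 0 else if t = 1 then 1 else (3::nat))"
    have p': "is_inf_path (KC3 :: (nat,'ap) kripke) \<sigma>'"
      unfolding is_inf_path_def \<sigma>'_def by (simp add: KC3_def)
    have h3: "is_init_trace (KC3 :: (nat,'ap) kripke) [0,1,3]"
      using init_trace_map[OF p', of 3] by (simp add: \<sigma>'_def KC3_def upt_rec)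
    define \<rho>' where "\<rho>' = [[0], [0,1], [0,1,3::nat]]"
    have "\<rho>' = map (\<lambda>j. take j [0,1,3::nat]) [1..<Suc (length [0,1,3::nat])]"
      by (simp add: \<rho>'_def upt_rec)
    then have "is_trace (comp_tree (KC3 :: (nat,'ap) kripke)) \<rho>'"
      unfolding ct_trace using h3 by (intro exI[of _ "[0,1,3]"] exI[of _ 1]) auto
    moreover have "\<rho> \<in> Pref \<rho>'" unfolding Pref_def rr \<rho>'_def
      by (intro CollectI exI[of _ 2]) simp
    moreover have "a \<notin> Lab (comp_tree (KC3 :: (nat,'ap) kripke)) (last \<rho>')"
      by (simp add: \<rho>'_def comp_tree_def KC3_def)
    ultimately show "\<exists>\<rho>'. is_trace (comp_tree (KC3 :: (nat,'ap) kripke)) \<rho>' \<and> \<rho> \<in> Pref \<rho>' \<and> length \<rho>' = 3 \<and>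
       a \<notin> Lab (comp_tree (KC3 :: (nat,'ap) kripke)) (last \<rho>')"
      by (intro exI[of _ \<rho>']) (simp add: \<rho>'_def)
  qed
qed

lemma KC4_ct: "\<not> models_ct (KC4 :: (nat,'ap) kripke) (phiC a)"
proof
  assume A: "models_ct (KC4 :: (nat,'ap) kripke) (phiC a)"
  define \<sigma> where "\<sigma> = (\<lambda>t::nat. if t = 0 then 0 else if t = 1 then 1 else (2::nat))"
  have p: "is_inf_path (KC4 :: (nat,'ap) kripke) \<sigma>"
    unfolding is_inf_path_def \<sigma>_def by (simp add: KC4_def)
  have h2: "is_init_trace (KC4 :: (nat,'ap) kripke) [0,1]"
    using init_trace_map[OF p, of 2] by (simp add: \<sigma>_def KC4_def upt_rec)
  define \<rho> where "\<rho> = [[0], [0,1::nat]]"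
  have "\<rho> = map (\<lambda>j. take j [0,1::nat]) [1..<Suc (length [0,1::nat])]"
    by (simp add: \<rho>_def upt_rec)
  then have "is_trace (comp_tree (KC4 :: (nat,'ap) kripke)) \<rho>"
    unfolding ct_trace using h2 by (intro exI[of _ "[0,1]"] exI[of _ 1]) auto
  then have "is_init_trace (comp_tree (KC4 :: (nat,'ap) kripke)) \<rho>"
    unfolding is_init_trace_def by (simp add: \<rho>_def comp_tree_def KC4_def)
  then have "sat_st (comp_tree (KC4 :: (nat,'ap) kripke)) \<rho> (phiC a)"
    using A by (simp add: models_ct_def models_st_def)
  then obtain \<rho>' where t: "is_trace (comp_tree (KC4 :: (nat,'ap) kripke)) \<rho>'" and pr: "\<rho> \<in> Pref \<rho>'"
    and l3: "length \<rho>' = 3" and lab: "a \<notin> Lab (comp_tree (KC4 :: (nat,'ap) kripke)) (last \<rho>')"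
    unfolding sat_phiC by (auto simp: \<rho>_def)
  from t obtain h k where h: "is_init_trace (KC4 :: (nat,'ap) kripke) h" "1 \<le> k" "k \<le> length h"
    and r: "\<rho>' = map (\<lambda>j. take j h) [k..<Suc (length h)]" unfolding ct_trace by blast
  from pr obtain i where i: "\<rho> = take i \<rho>'" "1 \<le> i" "i < length \<rho>'" unfolding Pref_def by blast
  have "length \<rho> = length (take i \<rho>')" using i(1) by simp
  then have i2: "i = 2" using l3 by (simp add: \<rho>_def)
  have lhk: "length h = k + 2" using l3 r h by simp
  have e0: "\<rho>' ! 0 = [0]"
  proof -
    have "\<rho> ! 0 = \<rho>' ! 0" using i(1) i2 by simp
    moreover have "\<rho> ! 0 = [0]" by (simp add: \<rho>_def)
    ultimately show ?thesis by simp
  qed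
  have "\<rho>' ! 0 = take k h" using r h lhk by simp
  then have E: "take k h = [0]" using e0 by simp
  have "length (take k h) = length [0::nat]" using arg_cong[where f=length, OF E] .
  then have k1: "k = 1" using h by simp
  have e1: "\<rho>' ! 1 = [0,1]"
  proof -
    have "\<rho> ! 1 = \<rho>' ! 1" using i(1) i2 by simp
    moreover have "\<rho> ! 1 = [0,1]" by (simp add: \<rho>_def)
    ultimately show ?thesis by simp
  qed
  have "\<rho>' ! 1 = take 2 h" using r k1 lhk by (simp add: numeral_2_eq_2)
  then have t2: "take 2 h = [0,1]" using e1 by simp
  have "take 2 h ! 1 = h ! 1" by simp
  then have h1: "h ! 1 = 1" using t2 by simp
  have "last \<rho>' = take 3 h" using r k1 lhk by (simp add: last_map)
  then have lr: "last \<rho>' = h" using lhk k1 by simp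
  obtain \<sigma>' where sp: "is_inf_path (KC4 :: (nat,'ap) kripke) \<sigma>'" "\<sigma>' 0 = 0"
    and hs: "\<And>i. i < length h \<Longrightarrow> h ! i = \<sigma>' i"
    using init_trace_nth[OF h(1)] by (auto simp: KC4_def)
  have "\<sigma>' 1 = 1" using h1 hs[of 1] lhk k1 by simp
  then have "\<sigma>' 2 = 2" using KC4_path(2)[OF sp] by simp
  moreover have "h \<noteq> []" using lhk by auto
  ultimately have "last h = 2" using hs[of 2] lhk k1 by (simp add: last_conv_nth numeral_2_eq_2)
  then show False using lab lr by (simp add: comp_tree_def KC4_def)
qed

lemma A_ct: "\<not> expr_geq (models_lin :: ('ap::finite) semantics) models_ct"
proof
  assume "expr_geq (models_lin :: ('ap::finite) semantics) models_ct"
  then obtain \<psi> :: "'ap hs" where eq: "expr_equiv models_lin \<psi> models_ct (phiC undefined)"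
    unfolding expr_geq_def by blast
  have "models_lin (KC3 :: (nat,'ap) kripke) \<psi>"
    using eq[unfolded expr_equiv_def, rule_format, OF finite_KC(1)] KC3_ct by simp
  moreover have "\<not> models_lin (KC4 :: (nat,'ap) kripke) \<psi>"
    using eq[unfolded expr_equiv_def, rule_format, OF finite_KC(2)] KC4_ct by simp
  ultimately show False using KC_lin by blast
qed

theorem theorem5p12:
  shows "expr_incomparable (models_lin :: ('ap::finite) semantics) models_st \<and>
         expr_incomparable (models_lin :: ('ap::finite) semantics) models_ct"
  unfolding expr_incomparable_def using A_st B_st A_ct B_ct by blast


end
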